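(* Let $n\ge1$. The dg algebra $(\mathcal{D}_{\mathbb{C}^{1|1}},[x^n\partial_\xi,\cdot])$ is quasi-isomorphic to the matrix algebra $gl_n(\mathbb{C})$ (concentrated in degree $0$ with zero differential).
   Context: $\mathcal{D}_{\mathbb{C}^{1|1}}$ is the algebra of differential operators on the polynomial superalgebra $\mathbb{C}[x,\xi]$ with $x$ even of degree $0$ and $\xi$ odd of cohomological degree $-1$, i.e. the super Weyl algebra generated by $x,\partial_x,\xi,\partial_\xi$ with $\deg\partial_\xi=1$. The element $x^n\partial_\xi$ is the differential of the Koszul resolution $K(\mathbb{C}[x],x^n)=\mathbb{C}[x,\xi]$ of $\mathbb{C}[x]/(x^n)$, and the differential on $\mathcal{D}_{\mathbb{C}^{1|1}}$ is the supercommutator with it. *)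

theory Defs
  imports "HOL-Computational_Algebra.Polynomial" "Jordan_Normal_Form.Matrix"
begin

text \<open>The grading is
  cohomological: dg_hom A k is the subspace of homogeneous elements of degree k,
  and the differential dg_d raises the degree by one.\<close>

record 'a dga =
  dg_car   :: "'a set"
  dg_zero  :: 'a
  dg_one   :: 'a
  dg_add   :: "'a \<Rightarrow> 'a \<Rightarrow> 'a"
  dg_smult :: "complex \<Rightarrow> 'a \<Rightarrow> 'a"
  dg_mult  :: "'a \<Rightarrow> 'a \<Rightarrow> 'a"
  dg_hom   :: "int \<Rightarrow> 'a set"
  dg_d     :: "'a \<Rightarrow> 'a"

definition dg_sum :: "'a dga \<Rightarrow> (int \<Rightarrow> 'a) \<Rightarrow> 'a" where
  "dg_sum A f = foldr (\<lambda>k s. dg_add A (f k) s)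
      (sorted_list_of_set {k. f k \<noteq> dg_zero A}) (dg_zero A)"

definition is_dga :: "'a dga \<Rightarrow> bool" where
  "is_dga A \<longleftrightarrow>
    \<comment> \<open>complex vector space\<close>
    dg_zero A \<in> dg_car A
  \<and> (\<forall>a\<in>dg_car A. \<forall>b\<in>dg_car A. dg_add A a b \<in> dg_car A)
  \<and> (\<forall>c. \<forall>a\<in>dg_car A. dg_smult A c a \<in> dg_car A)
  \<and> (\<forall>a\<in>dg_car A. \<forall>b\<in>dg_car A. \<forall>c\<in>dg_car A.
        dg_add A (dg_add A a b) c = dg_add A a (dg_add A b c))
  \<and> (\<forall>a\<in>dg_car A. \<forall>b\<in>dg_car A. dg_add A a b = dg_add A b a)
  \<and> (\<forall>a\<in>dg_car A. dg_add A a (dg_zero A) = a)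
  \<and> (\<forall>a\<in>dg_car A. dg_add A a (dg_smult A (-1) a) = dg_zero A)
  \<and> (\<forall>a\<in>dg_car A. dg_smult A 1 a = a)
  \<and> (\<forall>c e. \<forall>a\<in>dg_car A. dg_smult A (c * e) a = dg_smult A c (dg_smult A e a))
  \<and> (\<forall>c e. \<forall>a\<in>dg_car A. dg_smult A (c + e) a = dg_add A (dg_smult A c a) (dg_smult A e a))
  \<and> (\<forall>c. \<forall>a\<in>dg_car A. \<forall>b\<in>dg_car A.
        dg_smult A c (dg_add A a b) = dg_add A (dg_smult A c a) (dg_smult A c b))
    \<comment> \<open>associative unital algebra, bilinear multiplication\<close>
  \<and> dg_one A \<in> dg_car A
  \<and> (\<forall>a\<in>dg_car A. \<forall>b\<in>dg_car A. dg_mult A a b \<in> dg_car A)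
  \<and> (\<forall>a\<in>dg_car A. \<forall>b\<in>dg_car A. \<forall>c\<in>dg_car A.
        dg_mult A (dg_mult A a b) c = dg_mult A a (dg_mult A b c))
  \<and> (\<forall>a\<in>dg_car A. dg_mult A (dg_one A) a = a \<and> dg_mult A a (dg_one A) = a)
  \<and> (\<forall>a\<in>dg_car A. \<forall>b\<in>dg_car A. \<forall>c\<in>dg_car A.
        dg_mult A a (dg_add A b c) = dg_add A (dg_mult A a b) (dg_mult A a c)
      \<and> dg_mult A (dg_add A a b) c = dg_add A (dg_mult A a c) (dg_mult A b c))
  \<and> (\<forall>e. \<forall>a\<in>dg_car A. \<forall>b\<in>dg_car A.
        dg_mult A (dg_smult A e a) b = dg_smult A e (dg_mult A a b)
      \<and> dg_mult A a (dg_smult A e b) = dg_smult A e (dg_mult A a b))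
    \<comment> \<open>Z-grading: A is the internal direct sum of the subspaces dg_hom A k\<close>
  \<and> (\<forall>k. dg_hom A k \<subseteq> dg_car A \<and> dg_zero A \<in> dg_hom A k
        \<and> (\<forall>a\<in>dg_hom A k. \<forall>b\<in>dg_hom A k. dg_add A a b \<in> dg_hom A k)
        \<and> (\<forall>c. \<forall>a\<in>dg_hom A k. dg_smult A c a \<in> dg_hom A k))
  \<and> (\<forall>a\<in>dg_car A. \<exists>!f. (\<forall>k. f k \<in> dg_hom A k)
        \<and> finite {k. f k \<noteq> dg_zero A} \<and> a = dg_sum A f)
  \<and> (\<forall>k l. \<forall>a\<in>dg_hom A k. \<forall>b\<in>dg_hom A l. dg_mult A a b \<in> dg_hom A (k + l))
  \<and> dg_one A \<in> dg_hom A 0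
    \<comment> \<open>differential of degree +1, square zero, graded Leibniz rule\<close>
  \<and> (\<forall>k. \<forall>a\<in>dg_hom A k. dg_d A a \<in> dg_hom A (k + 1))
  \<and> (\<forall>a\<in>dg_car A. dg_d A a \<in> dg_car A)
  \<and> (\<forall>a\<in>dg_car A. \<forall>b\<in>dg_car A. dg_d A (dg_add A a b) = dg_add A (dg_d A a) (dg_d A b))
  \<and> (\<forall>c. \<forall>a\<in>dg_car A. dg_d A (dg_smult A c a) = dg_smult A c (dg_d A a))
  \<and> (\<forall>a\<in>dg_car A. dg_d A (dg_d A a) = dg_zero A)
  \<and> (\<forall>k. \<forall>a\<in>dg_hom A k. \<forall>b\<in>dg_car A.
        dg_d A (dg_mult A a b) =
          dg_add A (dg_mult A (dg_d A a) b)
                   (dg_smult A ((-1) ^ nat \<bar>k\<bar>) (dg_mult A a (dg_d A b))))"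

definition dga_hom :: "('a \<Rightarrow> 'b) \<Rightarrow> 'a dga \<Rightarrow> 'b dga \<Rightarrow> bool" where
  "dga_hom f A B \<longleftrightarrow>
     (\<forall>a\<in>dg_car A. f a \<in> dg_car B)
   \<and> (\<forall>a\<in>dg_car A. \<forall>b\<in>dg_car A. f (dg_add A a b) = dg_add B (f a) (f b))
   \<and> (\<forall>c. \<forall>a\<in>dg_car A. f (dg_smult A c a) = dg_smult B c (f a))
   \<and> (\<forall>a\<in>dg_car A. \<forall>b\<in>dg_car A. f (dg_mult A a b) = dg_mult B (f a) (f b))
   \<and> f (dg_one A) = dg_one B
   \<and> (\<forall>k. \<forall>a\<in>dg_hom A k. f a \<in> dg_hom B k)
   \<and> (\<forall>a\<in>dg_car A. f (dg_d A a) = dg_d B (f a))"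

definition dg_cocycles :: "'a dga \<Rightarrow> int \<Rightarrow> 'a set" where
  "dg_cocycles A k = {a \<in> dg_hom A k. dg_d A a = dg_zero A}"

definition dg_coboundaries :: "'a dga \<Rightarrow> int \<Rightarrow> 'a set" where
  "dg_coboundaries A k = dg_d A ` dg_hom A (k - 1)"

text \<open>A quasi-isomorphism: a dg algebra morphism inducing a bijection
  H^k(A) \<rightarrow> H^k(B) for every k (injectivity and surjectivity of the induced map
  on cohomology written out).\<close>
definition dga_qiso :: "('a \<Rightarrow> 'b) \<Rightarrow> 'a dga \<Rightarrow> 'b dga \<Rightarrow> bool" where
  "dga_qiso f A B \<longleftrightarrow> is_dga A \<and> is_dga B \<and> dga_hom f A B
   \<and> (\<forall>k. \<forall>z\<in>dg_cocycles A k. f z \<in> dg_coboundaries B k \<longrightarrow> z \<in> dg_coboundaries A k)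
   \<and> (\<forall>k. \<forall>w\<in>dg_cocycles B k. \<exists>z\<in>dg_cocycles A k. \<exists>b\<in>dg_hom B (k - 1).
          w = dg_add B (f z) (dg_d B b))"

definition qiso_step :: "'c dga \<Rightarrow> 'c dga \<Rightarrow> bool" where
  "qiso_step C C' \<longleftrightarrow> (\<exists>f. dga_qiso f C C') \<or> (\<exists>g. dga_qiso g C' C)"

text \<open>Quasi-isomorphic dg algebras: connected by a finite zigzag of
  quasi-isomorphisms, the intermediate dg algebras having elements in the
  universe type 'c.\<close>
definition quasi_isomorphic_in :: "'c itself \<Rightarrow> 'a dga \<Rightarrow> 'b dga \<Rightarrow> bool" where
  "quasi_isomorphic_in U A B \<longleftrightarrow>
     (\<exists>(A'::'c dga) (B'::'c dga).
        ((\<exists>f. dga_qiso f A A') \<or> (\<exists>g. dga_qiso g A' A))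
      \<and> ((\<exists>f. dga_qiso f B B') \<or> (\<exists>g. dga_qiso g B' B))
      \<and> qiso_step\<^sup>*\<^sup>* A' B')"

text \<open>C[x,xi] = C[x] \<oplus> C[x] xi; the pair (p,q) stands for p + q xi.
  Cohomological degrees: C[x] sits in degree 0, C[x] xi in degree -1.\<close>
type_synonym sv = "complex poly \<times> complex poly"
type_synonym sop = "sv \<Rightarrow> sv"

definition sv_deg :: "int \<Rightarrow> sv set" where
  "sv_deg j = (if j = 0 then {(p, 0) | p. True}
               else if j = -1 then {(0, q) | q. True} else {(0, 0)})"

definition op_x :: sop where "op_x = (\<lambda>(p, q). ([:0, 1:] * p, [:0, 1:] * q))"
definition op_dx :: sop where "op_dx = (\<lambda>(p, q). (pderiv p, pderiv q))"
definition op_xi :: sop where "op_xi = (\<lambda>(p, q). (0, p))"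
definition op_dxi :: sop where "op_dxi = (\<lambda>(p, q). (q, 0))"

definition op_add :: "sop \<Rightarrow> sop \<Rightarrow> sop" where
  "op_add f g = (\<lambda>v. (fst (f v) + fst (g v), snd (f v) + snd (g v)))"
definition op_smult :: "complex \<Rightarrow> sop \<Rightarrow> sop" where
  "op_smult c f = (\<lambda>v. (Polynomial.smult c (fst (f v)), Polynomial.smult c (snd (f v))))"
definition op_zero :: sop where "op_zero = (\<lambda>v. (0, 0))"

inductive_set Dops :: "sop set" where
  id_in: "id \<in> Dops"
| x_in: "op_x \<in> Dops"
| dx_in: "op_dx \<in> Dops"
| xi_in: "op_xi \<in> Dops"
| dxi_in: "op_dxi \<in> Dops"
| add_in: "f \<in> Dops \<Longrightarrow> g \<in> Dops \<Longrightarrow> op_add f g \<in> Dops"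
| smult_in: "f \<in> Dops \<Longrightarrow> op_smult c f \<in> Dops"
| comp_in: "f \<in> Dops \<Longrightarrow> g \<in> Dops \<Longrightarrow> f \<circ> g \<in> Dops"

text \<open>Parity operator (-1)^F on C[x,xi]; conjugation by it is the parity
  automorphism a \<mapsto> (-1)^{|a|} a of D.\<close>
definition op_parity :: sop where "op_parity = (\<lambda>(p, q). (p, - q))"

text \<open>Supercommutator [Q, a] = Q a - (-1)^{|a|} a Q for odd Q (extended linearly).\<close>
definition super_bracket_odd :: "sop \<Rightarrow> sop \<Rightarrow> sop" where
  "super_bracket_odd Q a = op_add (Q \<circ> a) (op_smult (-1) ((op_parity \<circ> a \<circ> op_parity) \<circ> Q))"

definition D11 :: "nat \<Rightarrow> sop dga" where
  "D11 n = \<lparr> dg_car = Dops, dg_zero = op_zero, dg_one = id,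
            dg_add = op_add, dg_smult = op_smult, dg_mult = (\<circ>),
            dg_hom = (\<lambda>k. {f \<in> Dops. \<forall>j. \<forall>v\<in>sv_deg j. f v \<in> sv_deg (j + k)}),
            dg_d = super_bracket_odd ((op_x ^^ n) \<circ> op_dxi) \<rparr>"

definition gl_dga :: "nat \<Rightarrow> complex mat dga" where
  "gl_dga n = \<lparr> dg_car = carrier_mat n n, dg_zero = 0\<^sub>m n n, dg_one = 1\<^sub>m n,
               dg_add = (+), dg_smult = (\<cdot>\<^sub>m), dg_mult = (*),
               dg_hom = (\<lambda>k. if k = 0 then carrier_mat n n else {0\<^sub>m n n}),
               dg_d = (\<lambda>_. 0\<^sub>m n n) \<rparr>"

end

theory Submission
  imports Defs "HOL-Library.Function_Algebras" "HOL-Library.Product_Plus"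
    "HOL-Computational_Algebra.Polynomial_Factorial" "HOL-Computational_Algebra.Field_as_Ring"
begin

type_synonym pop = "complex poly \<Rightarrow> complex poly"

definition sm :: "complex \<Rightarrow> sv \<Rightarrow> sv" where
  "sm c v = (Polynomial.smult c (fst v), Polynomial.smult c (snd v))"

definition linop :: "sop \<Rightarrow> bool" where
  "linop a \<longleftrightarrow> (\<forall>u v. a (u + v) = a u + a v) \<and> (\<forall>c u. a (sm c u) = sm c (a u))"

definition bA :: "sop \<Rightarrow> pop" where "bA a p = fst (a (p, 0))"
definition bB :: "sop \<Rightarrow> pop" where "bB a q = fst (a (0, q))"
definition bC :: "sop \<Rightarrow> pop" where "bC a p = snd (a (p, 0))"
definition bD :: "sop \<Rightarrow> pop" where "bD a q = snd (a (0, q))"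

definition blk :: "pop \<Rightarrow> pop \<Rightarrow> pop \<Rightarrow> pop \<Rightarrow> sop" where
  "blk A B C D = (\<lambda>(p, q). (A p + B q, C p + D q))"

lemma blk_apply[simp]: "blk A B C D (p, q) = (A p + B q, C p + D q)"
  by (simp add: blk_def)

lemma op_add_eq: "op_add f g = f + g" by (auto simp: op_add_def fun_eq_iff prod_eq_iff)
lemma op_zero_eq: "op_zero = 0" by (auto simp: op_zero_def fun_eq_iff zero_prod_def)
lemma op_smult_eq: "op_smult c f = (\<lambda>v. sm c (f v))" by (auto simp: op_smult_def sm_def)

inductive_set Wset :: "pop set" where
  w_id: "id \<in> Wset"
| w_x: "(\<lambda>p. [:0, 1:] * p) \<in> Wset"
| w_d: "pderiv \<in> Wset"
| w_add: "f \<in> Wset \<Longrightarrow> g \<in> Wset \<Longrightarrow> (\<lambda>p. f p + g p) \<in> Wset"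
| w_smult: "f \<in> Wset \<Longrightarrow> (\<lambda>p. Polynomial.smult c (f p)) \<in> Wset"
| w_comp: "f \<in> Wset \<Longrightarrow> g \<in> Wset \<Longrightarrow> f \<circ> g \<in> Wset"

lemma w_zero: "(\<lambda>p. 0) \<in> Wset"
  using w_smult[OF w_id, of 0] by simp

lemma w_neg: "f \<in> Wset \<Longrightarrow> (\<lambda>p. - f p) \<in> Wset"
  using w_smult[of f "-1"] by simp

lemma w_diff: "f \<in> Wset \<Longrightarrow> g \<in> Wset \<Longrightarrow> (\<lambda>p. f p - g p) \<in> Wset"
  using w_add[OF _ w_neg[of g], of f] by simp

definition wlin :: "pop \<Rightarrow> bool" where
  "wlin f \<longleftrightarrow> (\<forall>p q. f (p + q) = f p + f q) \<and> (\<forall>c p. f (Polynomial.smult c p) = Polynomial.smult c (f p))"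

lemma Wset_lin: "f \<in> Wset \<Longrightarrow> wlin f"
  by (induction rule: Wset.induct)
     (auto simp: wlin_def algebra_simps pderiv_add pderiv_smult smult_add_right)

lemma wlin_0: "wlin f \<Longrightarrow> f 0 = 0"
  unfolding wlin_def by (metis add_cancel_right_right add_0)

lemma wlin_minus: "wlin f \<Longrightarrow> f (- p) = - f p"
  unfolding wlin_def by (metis smult_1_left smult_minus_left)

lemma wlin_diff: "wlin f \<Longrightarrow> f (p - q) = f p - f q"
  using wlin_minus[of f q] unfolding wlin_def by (metis diff_conv_add_uminus)

lemma wlin_sum: "wlin f \<Longrightarrow> f (\<Sum>i\<in>S. g i) = (\<Sum>i\<in>S. f (g i))"
  by (induction S rule: infinite_finite_induct) (auto simp: wlin_0 wlin_def)

lemma linop_blk: "wlin A \<Longrightarrow> wlin B \<Longrightarrow> wlin C \<Longrightarrow> wlin D \<Longrightarrow> linop (blk A B C D)"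
  unfolding linop_def wlin_def sm_def by (auto simp: blk_def smult_add_right)

lemma linop_eq_blk: "linop a \<Longrightarrow> a = blk (bA a) (bB a) (bC a) (bD a)"
proof
  fix v assume "linop a"
  obtain p q :: "complex poly" where v: "v = (p, q)" by fastforce
  have "v = (p, 0) + (0, q)" by (simp add: v)
  hence "a v = a (p, 0) + a (0, q)" using \<open>linop a\<close> unfolding linop_def by metis
  thus "a v = blk (bA a) (bB a) (bC a) (bD a) v"
    by (simp add: v bA_def bB_def bC_def bD_def prod_eq_iff)
qed

lemma blk_parts[simp]:
  "bA (blk A B C D) = (\<lambda>p. A p + B 0)" "bB (blk A B C D) = (\<lambda>q. A 0 + B q)"
  "bC (blk A B C D) = (\<lambda>p. C p + D 0)" "bD (blk A B C D) = (\<lambda>q. C 0 + D q)"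
  by (auto simp: bA_def bB_def bC_def bD_def fun_eq_iff)

lemma linop_parts:
  assumes "linop a" shows "wlin (bA a)" "wlin (bB a)" "wlin (bC a)" "wlin (bD a)"
  using assms unfolding linop_def wlin_def bA_def bB_def bC_def bD_def sm_def
  by (auto, (metis add_Pair add_0 fst_add snd_add fst_conv snd_conv smult_0_right)+)


lemma linop_apply: "linop f \<Longrightarrow> f (u, v) = (bA f u + bB f v, bC f u + bD f v)"
  by (subst linop_eq_blk, assumption, simp)

lemma opx_pow: "(op_x ^^ k) (a, b) = ([:0, 1:] ^ k * a, [:0, 1:] ^ k * b)"
  by (induction k arbitrary: a b) (auto simp: op_x_def)

lemma Q_apply: "((op_x ^^ k) \<circ> op_dxi) (p, q) = ([:0, 1:] ^ k * q, 0)"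
  by (simp add: op_dxi_def opx_pow)

lemma blk_id: "id = blk id (\<lambda>_. 0) (\<lambda>_. 0) id" by (auto simp: fun_eq_iff)
lemma blk_x: "op_x = blk (\<lambda>p. [:0, 1:] * p) (\<lambda>_. 0) (\<lambda>_. 0) (\<lambda>p. [:0, 1:] * p)"
  by (auto simp: fun_eq_iff op_x_def)
lemma blk_dx: "op_dx = blk pderiv (\<lambda>_. 0) (\<lambda>_. 0) pderiv" by (auto simp: fun_eq_iff op_dx_def)
lemma blk_xi: "op_xi = blk (\<lambda>_. 0) (\<lambda>_. 0) id (\<lambda>_. 0)" by (auto simp: fun_eq_iff op_xi_def)
lemma blk_dxi: "op_dxi = blk (\<lambda>_. 0) id (\<lambda>_. 0) (\<lambda>_. 0)" by (auto simp: fun_eq_iff op_dxi_def)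

lemma blk_add: "op_add (blk A B C D) (blk A' B' C' D') =
   blk (\<lambda>p. A p + A' p) (\<lambda>p. B p + B' p) (\<lambda>p. C p + C' p) (\<lambda>p. D p + D' p)"
  by (auto simp: fun_eq_iff op_add_def)

lemma blk_smult: "op_smult c (blk A B C D) =
   blk (\<lambda>p. Polynomial.smult c (A p)) (\<lambda>p. Polynomial.smult c (B p)) (\<lambda>p. Polynomial.smult c (C p)) (\<lambda>p. Polynomial.smult c (D p))"
  by (auto simp: fun_eq_iff op_smult_def smult_add_right)

lemma blk_comp: "wlin A \<Longrightarrow> wlin B \<Longrightarrow> wlin C \<Longrightarrow> wlin D \<Longrightarrow> blk A B C D \<circ> blk A' B' C' D' =
   blk (\<lambda>p. A (A' p) + B (C' p)) (\<lambda>p. A (B' p) + B (D' p)) (\<lambda>p. C (A' p) + D (C' p)) (\<lambda>p. C (B' p) + D (D' p))"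
  by (auto simp: fun_eq_iff wlin_def)

lemma wlin_id: "wlin id" and wlin_0f: "wlin (\<lambda>_. 0)"
  by (auto simp: wlin_def)

lemma w_id': "(\<lambda>p. p) \<in> Wset" using w_id by (simp add: id_def)

lemma w_x': "pCons 0 \<in> Wset"
proof -
  have e: "(\<lambda>p::complex poly. [:0, 1:] * p) = pCons 0" by (rule ext) simp
  from w_x show ?thesis unfolding e .
qed

lemma Wset_wlin0: "f \<in> Wset \<Longrightarrow> f 0 = 0" using Wset_lin wlin_0 by blast

lemma blk_good:
  assumes "A \<in> Wset" "B \<in> Wset" "C \<in> Wset" "D \<in> Wset"
  shows "linop (blk A B C D) \<and> bA (blk A B C D) \<in> Wset \<and> bB (blk A B C D) \<in> Wset
     \<and> bC (blk A B C D) \<in> Wset \<and> bD (blk A B C D) \<in> Wset"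
  using assms Wset_wlin0[OF assms(1)] Wset_wlin0[OF assms(2)] Wset_wlin0[OF assms(3)] Wset_wlin0[OF assms(4)]
  by (simp add: linop_blk Wset_lin)

lemma blk_good':
  assumes "a = blk A B C D" "A \<in> Wset" "B \<in> Wset" "C \<in> Wset" "D \<in> Wset"
  shows "linop a \<and> bA a \<in> Wset \<and> bB a \<in> Wset \<and> bC a \<in> Wset \<and> bD a \<in> Wset"
  using blk_good[OF assms(2-5)] assms(1) by simp

lemma Dops_blk: "a \<in> Dops \<Longrightarrow> linop a \<and> bA a \<in> Wset \<and> bB a \<in> Wset \<and> bC a \<in> Wset \<and> bD a \<in> Wset"
proof (induction rule: Dops.induct)
  case id_in
  show ?case by (rule blk_good'[OF blk_id], auto intro: w_id w_zero)
next
  case x_in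
  show ?case by (rule blk_good'[OF blk_x], auto intro: w_x w_x' w_zero)
next
  case dx_in
  show ?case by (rule blk_good'[OF blk_dx], auto intro: w_d w_zero)
next
  case xi_in
  show ?case by (rule blk_good'[OF blk_xi], auto intro: w_id w_zero)
next
  case dxi_in
  show ?case by (rule blk_good'[OF blk_dxi], auto intro: w_id w_zero)
next
  case (add_in f g)
  have e: "op_add f g = blk (\<lambda>p. bA f p + bA g p) (\<lambda>p. bB f p + bB g p) (\<lambda>p. bC f p + bC g p) (\<lambda>p. bD f p + bD g p)"
    using add_in linop_eq_blk blk_add by metis
  show ?case
    by (rule blk_good'[OF e]) (insert add_in, auto intro: w_add)
next
  case (smult_in f c)
  have e: "op_smult c f = blk (\<lambda>p. Polynomial.smult c (bA f p)) (\<lambda>p. Polynomial.smult c (bB f p))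
     (\<lambda>p. Polynomial.smult c (bC f p)) (\<lambda>p. Polynomial.smult c (bD f p))"
    using smult_in linop_eq_blk blk_smult by metis
  show ?case
    by (rule blk_good'[OF e]) (insert smult_in, auto intro: w_smult)
next
  case (comp_in f g)
  have L: "wlin (bA f)" "wlin (bB f)" "wlin (bC f)" "wlin (bD f)"
    using comp_in Wset_lin by auto
  have e: "f \<circ> g = blk (\<lambda>p. bA f (bA g p) + bB f (bC g p)) (\<lambda>p. bA f (bB g p) + bB f (bD g p))
     (\<lambda>p. bC f (bA g p) + bD f (bC g p)) (\<lambda>p. bC f (bB g p) + bD f (bD g p))"
    using comp_in linop_eq_blk blk_comp[OF L] by metis
  have W: "(\<lambda>p. u (v p) + w (z p)) \<in> Wset" if "u \<in> Wset" "v \<in> Wset" "w \<in> Wset" "z \<in> Wset" for u v w z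
    using w_add[OF w_comp[OF that(1,2)] w_comp[OF that(3,4)]] by (simp add: o_def)
  show ?case
    by (rule blk_good'[OF e]) (insert comp_in, auto intro: W)
qed

lemma Pi0_Dops: "blk id (\<lambda>_. 0) (\<lambda>_. 0) (\<lambda>_. 0) \<in> Dops"
proof -
  have "op_add id (op_smult (-1) (op_xi \<circ> op_dxi)) = blk id (\<lambda>_. 0) (\<lambda>_. 0) (\<lambda>_. 0)"
    by (auto simp: fun_eq_iff op_add_def op_smult_def op_xi_def op_dxi_def)
  thus ?thesis by (metis Dops.intros)
qed

lemma blk1_Dops: "w \<in> Wset \<Longrightarrow> blk w (\<lambda>_. 0) (\<lambda>_. 0) (\<lambda>_. 0) \<in> Dops"
proof (induction rule: Wset.induct)
  case w_id then show ?case using Pi0_Dops by (simp add: id_def)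
next
  case w_x
  have "blk id (\<lambda>_. 0) (\<lambda>_. 0) (\<lambda>_. 0) \<circ> op_x = blk (\<lambda>p. [:0, 1:] * p) (\<lambda>_. 0) (\<lambda>_. 0) (\<lambda>_. 0)"
    by (auto simp: fun_eq_iff op_x_def)
  then show ?case by (metis Pi0_Dops Dops.intros)
next
  case w_d
  have "blk id (\<lambda>_. 0) (\<lambda>_. 0) (\<lambda>_. 0) \<circ> op_dx = blk pderiv (\<lambda>_. 0) (\<lambda>_. 0) (\<lambda>_. 0)"
    by (auto simp: fun_eq_iff op_dx_def)
  then show ?case by (metis Pi0_Dops Dops.intros)
next
  case (w_add f g)
  then show ?case using Dops.add_in[OF w_add.IH] by (simp add: blk_add)
next
  case (w_smult f c)
  then show ?case using Dops.smult_in[OF w_smult.IH, of c] by (simp add: blk_smult)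
next
  case (w_comp f g)
  have "blk f (\<lambda>_. 0) (\<lambda>_. 0) (\<lambda>_. 0) \<circ> blk g (\<lambda>_. 0) (\<lambda>_. 0) (\<lambda>_. 0) = blk (f \<circ> g) (\<lambda>_. 0) (\<lambda>_. 0) (\<lambda>_. 0)"
    using Wset_wlin0[OF w_comp.hyps(1)] by (auto simp: fun_eq_iff)
  then show ?case by (metis w_comp.IH Dops.intros)
qed

lemma blk_Dops:
  assumes "A \<in> Wset" "B \<in> Wset" "C \<in> Wset" "D \<in> Wset"
  shows "blk A B C D \<in> Dops"
proof -
  have a: "blk A (\<lambda>_. 0) (\<lambda>_. 0) (\<lambda>_. 0) \<in> Dops" using blk1_Dops assms by auto
  have "blk B (\<lambda>_. 0) (\<lambda>_. 0) (\<lambda>_. 0) \<circ> op_dxi = blk (\<lambda>_. 0) B (\<lambda>_. 0) (\<lambda>_. 0)"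
    using Wset_wlin0[OF assms(2)] by (auto simp: fun_eq_iff op_dxi_def)
  hence b: "blk (\<lambda>_. 0) B (\<lambda>_. 0) (\<lambda>_. 0) \<in> Dops" by (metis blk1_Dops assms(2) Dops.intros)
  have "op_xi \<circ> blk C (\<lambda>_. 0) (\<lambda>_. 0) (\<lambda>_. 0) = blk (\<lambda>_. 0) (\<lambda>_. 0) C (\<lambda>_. 0)"
    by (auto simp: fun_eq_iff op_xi_def)
  hence c: "blk (\<lambda>_. 0) (\<lambda>_. 0) C (\<lambda>_. 0) \<in> Dops" by (metis blk1_Dops assms(3) Dops.intros)
  have "op_xi \<circ> blk D (\<lambda>_. 0) (\<lambda>_. 0) (\<lambda>_. 0) \<circ> op_dxi = blk (\<lambda>_. 0) (\<lambda>_. 0) (\<lambda>_. 0) D"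
    using Wset_wlin0[OF assms(4)] by (auto simp: fun_eq_iff op_xi_def op_dxi_def)
  hence d: "blk (\<lambda>_. 0) (\<lambda>_. 0) (\<lambda>_. 0) D \<in> Dops" by (metis blk1_Dops assms(4) Dops.intros)
  have "op_add (op_add a' b') (op_add c' d') = blk A B C D"
    if "a' = blk A (\<lambda>_. 0) (\<lambda>_. 0) (\<lambda>_. 0)" "b' = blk (\<lambda>_. 0) B (\<lambda>_. 0) (\<lambda>_. 0)"
       "c' = blk (\<lambda>_. 0) (\<lambda>_. 0) C (\<lambda>_. 0)" "d' = blk (\<lambda>_. 0) (\<lambda>_. 0) (\<lambda>_. 0) D" for a' b' c' d'
    using that by (auto simp: fun_eq_iff op_add_def)
  thus ?thesis by (metis a b c d Dops.add_in)
qed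


abbreviation Qop :: "nat \<Rightarrow> sop" where "Qop n \<equiv> (op_x ^^ n) \<circ> op_dxi"
abbreviation dD :: "nat \<Rightarrow> sop \<Rightarrow> sop" where "dD n \<equiv> super_bracket_odd (Qop n)"
abbreviation zf :: pop where "zf \<equiv> (\<lambda>_. 0)"

lemma Qop_eval': "(op_x ^^ n) (op_dxi v) = ([:0, 1:] ^ n * snd v, 0)"
  by (cases v) (simp add: op_dxi_def opx_pow)

lemma Qop_eval: "Qop n v = ([:0, 1:] ^ n * snd v, 0)"
  by (simp add: Qop_eval')

lemma P_eval: "op_parity v = (fst v, - snd v)"
  by (cases v) (simp add: op_parity_def)

lemma dD_eval: "dD n a v = ([:0, 1:] ^ n * snd (a v) - fst (a ([:0, 1:] ^ n * snd v, 0)),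
                            snd (a ([:0, 1:] ^ n * snd v, 0)))"
  by (simp add: super_bracket_odd_def op_add_def op_smult_def Qop_eval' P_eval)

lemma linop_00: "linop a \<Longrightarrow> a (0, 0) = (0, 0)"
  using linop_apply[of a 0 0] linop_parts[of a] by (simp add: wlin_0)

lemma Dops_00: "a \<in> Dops \<Longrightarrow> a (0, 0) = (0, 0)"
  using Dops_blk linop_00 by blast

lemma Dops_apply: "a \<in> Dops \<Longrightarrow> a (u, v) = (bA a u + bB a v, bC a u + bD a v)"
  using Dops_blk linop_apply by blast

lemma opx_pow_Dops: "op_x ^^ k \<in> Dops"
proof (induction k)
  case 0 then show ?case using Dops.id_in by (simp add: id_def)
next
  case (Suc k)
  have "op_x ^^ Suc k = op_x \<circ> (op_x ^^ k)" by simp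
  then show ?case using Suc Dops.x_in Dops.comp_in by metis
qed

lemma Qop_Dops: "Qop n \<in> Dops" by (intro Dops.intros opx_pow_Dops)

lemma P_Dops: "op_parity \<in> Dops"
proof -
  have "op_add (op_add id (op_smult (-1) (op_xi \<circ> op_dxi))) (op_smult (-1) (op_xi \<circ> op_dxi)) = op_parity"
    by (auto simp: fun_eq_iff op_add_def op_smult_def op_xi_def op_dxi_def op_parity_def)
  thus ?thesis by (metis Dops.intros)
qed

lemma dD_Dops: "a \<in> Dops \<Longrightarrow> dD n a \<in> Dops"
  unfolding super_bracket_odd_def by (intro Dops.intros Qop_Dops P_Dops)

lemma zero_Dops: "op_zero \<in> Dops"
proof -
  have "op_smult 0 id = op_zero" by (auto simp: fun_eq_iff op_smult_def op_zero_def)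
  thus ?thesis by (metis Dops.intros)
qed

lemma in_sv_deg: "v \<in> sv_deg j \<longleftrightarrow> (if j = 0 then snd v = 0 else if j = -1 then fst v = 0 else v = (0, 0))"
  by (cases v) (auto simp: sv_deg_def)

lemma hom_D: "dg_hom (D11 n) k = {a \<in> Dops. \<forall>j. \<forall>v\<in>sv_deg j. a v \<in> sv_deg (j + k)}"
  by (simp add: D11_def)

lemma hom_iff: "a \<in> dg_hom (D11 n) k \<longleftrightarrow> a \<in> Dops \<and> (\<forall>p. (bA a p, bC a p) \<in> sv_deg k)
   \<and> (\<forall>q. (bB a q, bD a q) \<in> sv_deg (k - 1))"
proof
  assume h: "a \<in> dg_hom (D11 n) k"
  hence a: "a \<in> Dops" by (simp add: hom_D)
  have 1: "(bA a p, bC a p) \<in> sv_deg k" for p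
    using h by (auto simp: hom_D bA_def bC_def in_sv_deg[of "(p,0)"] dest!: spec[of _ 0] bspec[of _ _ "(p,0)"])
  have 2: "(bB a q, bD a q) \<in> sv_deg (k - 1)" for q
    using h by (auto simp: hom_D bB_def bD_def in_sv_deg[of "(0,q)"] dest!: spec[of _ "-1"] bspec[of _ _ "(0,q)"])
  show "a \<in> Dops \<and> (\<forall>p. (bA a p, bC a p) \<in> sv_deg k) \<and> (\<forall>q. (bB a q, bD a q) \<in> sv_deg (k - 1))"
    using a 1 2 by blast
next
  assume h: "a \<in> Dops \<and> (\<forall>p. (bA a p, bC a p) \<in> sv_deg k) \<and> (\<forall>q. (bB a q, bD a q) \<in> sv_deg (k - 1))"
  hence a: "a \<in> Dops" by blast
  have "a v \<in> sv_deg (j + k)" if v: "v \<in> sv_deg j" for j v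
  proof -
    obtain p q where pq: "v = (p, q)" by fastforce
    have av: "a v = (bA a p + bB a q, bC a p + bD a q)" using Dops_apply[OF a] pq by simp
    have z: "bA a 0 = 0" "bB a 0 = 0" "bC a 0 = 0" "bD a 0 = 0"
      using Dops_blk[OF a] Wset_wlin0 by auto
    show ?thesis
    proof (cases "j = 0")
      case True
      then have "q = 0" using v pq by (simp add: in_sv_deg)
      then show ?thesis using True h av z by simp
    next
      case False
      note F = this
      show ?thesis
      proof (cases "j = -1")
        case True
        then have "p = 0" using v pq by (simp add: in_sv_deg)
        then show ?thesis using True h av z by simp
      next
        case False
        then have "p = 0" "q = 0" using F v pq by (auto simp: in_sv_deg)
        then show ?thesis using av z by (simp add: in_sv_deg)
      qed
    qed
  qed
  thus "a \<in> dg_hom (D11 n) k" using a by (simp add: hom_D)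
qed

lemma hom_blk: "a \<in> dg_hom (D11 n) k \<longleftrightarrow> a \<in> Dops \<and>
   (if k = 0 then bB a = zf \<and> bC a = zf
    else if k = 1 then bA a = zf \<and> bC a = zf \<and> bD a = zf
    else if k = -1 then bA a = zf \<and> bB a = zf \<and> bD a = zf
    else bA a = zf \<and> bB a = zf \<and> bC a = zf \<and> bD a = zf)"
  unfolding hom_iff by (auto simp: in_sv_deg fun_eq_iff)


lemma Dops_add: "a \<in> Dops \<Longrightarrow> a (u + v) = a u + a v"
  using Dops_blk unfolding linop_def by blast
lemma Dops_sm: "a \<in> Dops \<Longrightarrow> a (sm c u) = sm c (a u)"
  using Dops_blk unfolding linop_def by blast
lemma Dops_0: "a \<in> Dops \<Longrightarrow> a 0 = 0"
  using Dops_00[of a] by (simp add: zero_prod_def)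
lemma sm_m1: "sm (-1) v = - v" by (simp add: sm_def prod_eq_iff)
lemma sm_1: "sm 1 v = v" by (simp add: sm_def)
lemma Dops_minus: "a \<in> Dops \<Longrightarrow> a (- u) = - a u"
  using Dops_sm[of a "-1" u] by (simp add: sm_m1)
lemma Dops_diff: "a \<in> Dops \<Longrightarrow> a (u - v) = a u - a v"
  using Dops_add[of a u "- v"] Dops_minus[of a v] by simp

lemma dD_alt: "dD n a v = Qop n (a v) - op_parity (a (op_parity (Qop n v)))"
  by (simp add: super_bracket_odd_def op_add_eq op_smult_eq sm_m1 del: comp_apply) (simp add: o_def)

lemma PP: "op_parity (op_parity v) = v" by (simp add: P_eval)
lemma P_diff: "op_parity (u - v) = op_parity u - op_parity v" by (simp add: P_eval)
lemma P_add: "op_parity (u + v) = op_parity u + op_parity v" by (simp add: P_eval)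
lemma Q_diff: "Qop n (u - v) = Qop n u - Qop n v" by (simp add: Qop_eval' algebra_simps)
lemma Q_add: "Qop n (u + v) = Qop n u + Qop n v" by (simp add: Qop_eval' algebra_simps)
lemma P_sm: "op_parity (sm c u) = sm c (op_parity u)" by (simp add: P_eval sm_def)
lemma Q_sm: "Qop n (sm c u) = sm c (Qop n u)" by (simp add: Qop_eval' sm_def)
lemma sm_diff: "sm c (u - v) = sm c u - sm c v" by (simp add: sm_def smult_diff_right)
lemma sm_add: "sm c (u + v) = sm c u + sm c v" by (simp add: sm_def smult_add_right)

lemma dD_parts: assumes "a \<in> Dops"
  shows "bA (dD n a) = (\<lambda>p. [:0, 1:] ^ n * bC a p)"
        "bB (dD n a) = (\<lambda>q. [:0, 1:] ^ n * bD a q - bA a ([:0, 1:] ^ n * q))"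
        "bC (dD n a) = zf" "bD (dD n a) = (\<lambda>q. bC a ([:0, 1:] ^ n * q))"
  using Dops_00[OF assms] by (auto simp: fun_eq_iff bA_def bB_def bC_def bD_def dD_eval)

lemma sign_hom:
  assumes "a \<in> dg_hom (D11 n) k"
  shows "op_parity (a (op_parity w)) = sm ((-1) ^ nat \<bar>k\<bar>) (a w)"
proof -
  obtain p q where w: "w = (p, q)" by fastforce
  have a: "a \<in> Dops" using assms hom_blk by blast
  have L: "wlin (bA a)" "wlin (bB a)" "wlin (bC a)" "wlin (bD a)"
    using Dops_blk[OF a] Wset_lin by auto
  have m: "bB a (- q) = - bB a q" "bD a (- q) = - bD a q" using L wlin_minus by auto
  have pw: "op_parity w = (p, - q)" by (simp add: w P_eval)
  consider "k = 0" | "k = 1" | "k = -1" | "k \<noteq> 0 \<and> k \<noteq> 1 \<and> k \<noteq> -1" by blast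
  then show ?thesis
  proof cases
    case 1 then show ?thesis using assms unfolding hom_blk
      by (simp add: pw w Dops_apply[OF a] m P_eval sm_1)
  next
    case 2 then show ?thesis using assms unfolding hom_blk
      by (simp add: pw w Dops_apply[OF a] m P_eval sm_m1)
  next
    case 3 then show ?thesis using assms unfolding hom_blk
      by (simp add: pw w Dops_apply[OF a] m P_eval sm_m1)
  next
    case 4 then show ?thesis using assms unfolding hom_blk
      by (simp add: pw w Dops_apply[OF a] m P_eval sm_def)
  qed
qed

lemma leibniz_D:
  assumes ak: "a \<in> dg_hom (D11 n) k" and b: "b \<in> Dops"
  shows "dD n (a \<circ> b) = op_add (dD n a \<circ> b) (op_smult ((-1) ^ nat \<bar>k\<bar>) (a \<circ> dD n b))"
proof (rule ext)
  fix v
  define s :: complex where "s = (-1) ^ nat \<bar>k\<bar>"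
  have a: "a \<in> Dops" using ak hom_blk by blast
  have sg: "op_parity (a (op_parity w)) = sm s (a w)" for w using sign_hom[OF ak] s_def by simp
  have sg2: "sm s (a (op_parity w)) = op_parity (a w)" for w
    using sg[of "op_parity w"] by (simp add: PP)
  have "op_add (dD n a \<circ> b) (op_smult s (a \<circ> dD n b)) v
     = (Qop n (a (b v)) - op_parity (a (op_parity (Qop n (b v)))))
       + sm s (a (Qop n (b v)) - a (op_parity (b (op_parity (Qop n v)))))"
    by (simp add: op_add_eq op_smult_eq dD_alt Dops_diff[OF a])
  also have "\<dots> = Qop n (a (b v)) - op_parity (a (b (op_parity (Qop n v))))"
    by (simp add: sm_diff sg sg2)
  also have "\<dots> = dD n (a \<circ> b) v" by (simp add: dD_alt)
  finally show "dD n (a \<circ> b) v = op_add (dD n a \<circ> b) (op_smult ((-1) ^ nat \<bar>k\<bar>) (a \<circ> dD n b)) v"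
    by (simp add: s_def)
qed

lemma dd_zero: "a \<in> Dops \<Longrightarrow> dD n (dD n a) = op_zero"
  by (rule ext) (simp add: dD_eval Dops_00 op_zero_def)

lemma dD_hom: assumes "a \<in> dg_hom (D11 n) k" shows "dD n a \<in> dg_hom (D11 n) (k + 1)"
proof -
  have a: "a \<in> Dops" using assms hom_blk by blast
  have W: "bA a 0 = 0" "bB a 0 = 0" "bC a 0 = 0" "bD a 0 = 0"
    using Dops_blk[OF a] Wset_wlin0 by auto
  consider "k = 0" | "k = 1" | "k = -1" | "k \<noteq> 0 \<and> k \<noteq> 1 \<and> k \<noteq> -1" by blast
  then show ?thesis
  proof cases
    case 1 then show ?thesis using assms unfolding hom_blk
      by (simp add: dD_Dops dD_parts[OF a] fun_eq_iff)
  next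
    case 2 then show ?thesis using assms unfolding hom_blk
      by (simp add: dD_Dops dD_parts[OF a] fun_eq_iff)
  next
    case 3 then show ?thesis using assms unfolding hom_blk
      by (simp add: dD_Dops dD_parts[OF a] fun_eq_iff)
  next
    case 4 then show ?thesis using assms unfolding hom_blk
      by (auto simp add: dD_Dops dD_parts[OF a] fun_eq_iff)
  qed
qed


lemma foldr_sum: "foldr (\<lambda>k s. op_add (f k) s) xs op_zero = sum_list (map f xs)"
  by (induction xs) (simp_all add: op_add_eq op_zero_eq)

lemma dgsum_D:
  assumes "{k. f k \<noteq> op_zero} \<subseteq> {-1, 0, 1}"
  shows "dg_sum (D11 n) f = f (-1) + f 0 + f 1"
proof -
  let ?S = "{k. f k \<noteq> op_zero}"
  have fin: "finite ?S" using assms finite_subset by blast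
  have "dg_sum (D11 n) f = sum_list (map f (sorted_list_of_set ?S))"
    by (simp add: dg_sum_def D11_def foldr_sum)
  also have "\<dots> = sum f ?S" by (simp add: sum_list_distinct_conv_sum_set fin)
  also have "\<dots> = sum f {-1, 0, 1}"
    by (rule sum.mono_neutral_left) (use assms in \<open>auto simp: op_zero_eq\<close>)
  also have "\<dots> = f (-1) + f 0 + f 1" by (simp add: add.assoc)
  finally show ?thesis .
qed

definition compo :: "sop \<Rightarrow> int \<Rightarrow> sop" where
  "compo a k = (if k = 0 then blk (bA a) zf zf (bD a) else if k = 1 then blk zf (bB a) zf zf
     else if k = -1 then blk zf zf (bC a) zf else op_zero)"

lemma op_zero_blk: "op_zero = blk zf zf zf zf" by (auto simp: fun_eq_iff op_zero_def)

lemma compo_hom: assumes a: "a \<in> Dops" shows "compo a k \<in> dg_hom (D11 n) k"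
proof -
  have W: "bA a \<in> Wset" "bB a \<in> Wset" "bC a \<in> Wset" "bD a \<in> Wset" using Dops_blk[OF a] by auto
  have W0: "bA a 0 = 0" "bB a 0 = 0" "bC a 0 = 0" "bD a 0 = 0"
    using W Wset_wlin0 by auto
  show ?thesis unfolding hom_blk compo_def
    by (auto simp: W0 blk_Dops W w_zero zero_Dops op_zero_blk)
qed

lemma compo_supp: "{k. compo a k \<noteq> op_zero} \<subseteq> {-1, 0, 1}"
  by (auto simp: compo_def)

lemma bparts_add: "bA (f + g) = (\<lambda>p. bA f p + bA g p)" "bB (f + g) = (\<lambda>p. bB f p + bB g p)"
   "bC (f + g) = (\<lambda>p. bC f p + bC g p)" "bD (f + g) = (\<lambda>p. bD f p + bD g p)"
  by (auto simp: bA_def bB_def bC_def bD_def fun_eq_iff)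

lemma bparts_smult: "bA (op_smult c f) = (\<lambda>p. Polynomial.smult c (bA f p))"
   "bB (op_smult c f) = (\<lambda>p. Polynomial.smult c (bB f p))"
   "bC (op_smult c f) = (\<lambda>p. Polynomial.smult c (bC f p))"
   "bD (op_smult c f) = (\<lambda>p. Polynomial.smult c (bD f p))"
  by (auto simp: bA_def bB_def bC_def bD_def fun_eq_iff op_smult_def)

lemma compo_sum: assumes a: "a \<in> Dops" shows "dg_sum (D11 n) (compo a) = a"
proof -
  have W0: "bA a 0 = 0" "bB a 0 = 0" "bC a 0 = 0" "bD a 0 = 0"
    using Dops_blk[OF a] Wset_wlin0 by auto
  show ?thesis
    by (subst dgsum_D[OF compo_supp], rule ext)
       (auto simp: compo_def Dops_apply[OF a] W0)
qed

lemma hom_zero_big: "a \<in> dg_hom (D11 n) k \<Longrightarrow> k \<noteq> 0 \<Longrightarrow> k \<noteq> 1 \<Longrightarrow> k \<noteq> -1 \<Longrightarrow> a = op_zero"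
  unfolding hom_blk by (metis Dops_blk linop_eq_blk op_zero_blk)

lemma decomp_unique:
  assumes a: "a \<in> Dops" and f: "\<forall>k. f k \<in> dg_hom (D11 n) k" and s: "a = dg_sum (D11 n) f"
  shows "f = compo a"
proof -
  have supp: "{k. f k \<noteq> op_zero} \<subseteq> {-1, 0, 1}" using f hom_zero_big by blast
  have aa: "a = f (-1) + f 0 + f 1" using s dgsum_D[OF supp] by simp
  have h: "f (-1) \<in> dg_hom (D11 n) (-1)" "f 0 \<in> dg_hom (D11 n) 0" "f 1 \<in> dg_hom (D11 n) 1"
    using f by auto
  have D: "f k \<in> Dops" for k using f hom_blk by blast
  have eq: "f k = blk (bA (f k)) (bB (f k)) (bC (f k)) (bD (f k))" for k
    using D Dops_blk linop_eq_blk by blast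
  have pa: "bA a = bA (f 0)" "bB a = bB (f 1)" "bC a = bC (f (-1))" "bD a = bD (f 0)"
    using h unfolding aa hom_blk by (auto simp: bparts_add fun_eq_iff)
  show ?thesis
  proof (rule ext)
    fix k :: int
    consider "k = 0" | "k = 1" | "k = -1" | "k \<noteq> 0 \<and> k \<noteq> 1 \<and> k \<noteq> -1" by blast
    then show "f k = compo a k"
    proof cases
      case 1 then show ?thesis using h eq[of 0] pa unfolding hom_blk compo_def by auto
    next
      case 2 then show ?thesis using h eq[of 1] pa unfolding hom_blk compo_def by auto
    next
      case 3 then show ?thesis using h eq[of "-1"] pa unfolding hom_blk compo_def by auto
    next
      case 4 then show ?thesis using hom_zero_big f unfolding compo_def by auto
    qed
  qed
qed

lemma is_dga_D: "is_dga (D11 n)"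
  unfolding is_dga_def
proof (intro conjI)
  show "dg_zero (D11 n) \<in> dg_car (D11 n)" by (simp add: D11_def zero_Dops)
  show "\<forall>a\<in>dg_car (D11 n). \<forall>b\<in>dg_car (D11 n). dg_add (D11 n) a b \<in> dg_car (D11 n)"
    by (simp add: D11_def Dops.intros)
  show "\<forall>c. \<forall>a\<in>dg_car (D11 n). dg_smult (D11 n) c a \<in> dg_car (D11 n)"
    by (simp add: D11_def Dops.intros)
  show "\<forall>a\<in>dg_car (D11 n). \<forall>b\<in>dg_car (D11 n). \<forall>c\<in>dg_car (D11 n).
        dg_add (D11 n) (dg_add (D11 n) a b) c = dg_add (D11 n) a (dg_add (D11 n) b c)"
    by (simp add: D11_def op_add_eq add.assoc)
  show "\<forall>a\<in>dg_car (D11 n). \<forall>b\<in>dg_car (D11 n). dg_add (D11 n) a b = dg_add (D11 n) b a"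
    by (simp add: D11_def op_add_eq add.commute)
  show "\<forall>a\<in>dg_car (D11 n). dg_add (D11 n) a (dg_zero (D11 n)) = a"
    by (simp add: D11_def op_add_eq op_zero_eq)
  show "\<forall>a\<in>dg_car (D11 n). dg_add (D11 n) a (dg_smult (D11 n) (-1) a) = dg_zero (D11 n)"
    by (simp add: D11_def op_add_eq op_zero_eq op_smult_eq sm_m1 fun_eq_iff)
  show "\<forall>a\<in>dg_car (D11 n). dg_smult (D11 n) 1 a = a"
    by (simp add: D11_def op_smult_eq sm_1)
  show "\<forall>c e. \<forall>a\<in>dg_car (D11 n). dg_smult (D11 n) (c * e) a = dg_smult (D11 n) c (dg_smult (D11 n) e a)"
    by (simp add: D11_def op_smult_eq sm_def)
  show "\<forall>c e. \<forall>a\<in>dg_car (D11 n). dg_smult (D11 n) (c + e) a =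
      dg_add (D11 n) (dg_smult (D11 n) c a) (dg_smult (D11 n) e a)"
    by (simp add: D11_def op_smult_eq op_add_eq sm_def fun_eq_iff smult_add_left)
  show "\<forall>c. \<forall>a\<in>dg_car (D11 n). \<forall>b\<in>dg_car (D11 n).
      dg_smult (D11 n) c (dg_add (D11 n) a b) = dg_add (D11 n) (dg_smult (D11 n) c a) (dg_smult (D11 n) c b)"
    by (simp add: D11_def op_smult_eq op_add_eq sm_def fun_eq_iff smult_add_right)
  show "dg_one (D11 n) \<in> dg_car (D11 n)" by (simp add: D11_def Dops.intros)
  show "\<forall>a\<in>dg_car (D11 n). \<forall>b\<in>dg_car (D11 n). dg_mult (D11 n) a b \<in> dg_car (D11 n)"
    by (simp add: D11_def Dops.intros)
  show "\<forall>a\<in>dg_car (D11 n). \<forall>b\<in>dg_car (D11 n). \<forall>c\<in>dg_car (D11 n).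
      dg_mult (D11 n) (dg_mult (D11 n) a b) c = dg_mult (D11 n) a (dg_mult (D11 n) b c)"
    by (simp add: D11_def o_assoc)
  show "\<forall>a\<in>dg_car (D11 n). dg_mult (D11 n) (dg_one (D11 n)) a = a \<and> dg_mult (D11 n) a (dg_one (D11 n)) = a"
    by (simp add: D11_def)
  show "\<forall>a\<in>dg_car (D11 n). \<forall>b\<in>dg_car (D11 n). \<forall>c\<in>dg_car (D11 n).
        dg_mult (D11 n) a (dg_add (D11 n) b c) = dg_add (D11 n) (dg_mult (D11 n) a b) (dg_mult (D11 n) a c)
      \<and> dg_mult (D11 n) (dg_add (D11 n) a b) c = dg_add (D11 n) (dg_mult (D11 n) a c) (dg_mult (D11 n) b c)"
    by (simp add: D11_def op_add_eq fun_eq_iff Dops_add)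
  show "\<forall>e. \<forall>a\<in>dg_car (D11 n). \<forall>b\<in>dg_car (D11 n).
        dg_mult (D11 n) (dg_smult (D11 n) e a) b = dg_smult (D11 n) e (dg_mult (D11 n) a b)
      \<and> dg_mult (D11 n) a (dg_smult (D11 n) e b) = dg_smult (D11 n) e (dg_mult (D11 n) a b)"
    by (simp add: D11_def op_smult_eq fun_eq_iff Dops_sm)
  show "\<forall>k. dg_hom (D11 n) k \<subseteq> dg_car (D11 n) \<and> dg_zero (D11 n) \<in> dg_hom (D11 n) k
        \<and> (\<forall>a\<in>dg_hom (D11 n) k. \<forall>b\<in>dg_hom (D11 n) k. dg_add (D11 n) a b \<in> dg_hom (D11 n) k)
        \<and> (\<forall>c. \<forall>a\<in>dg_hom (D11 n) k. dg_smult (D11 n) c a \<in> dg_hom (D11 n) k)"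
  proof (intro allI conjI ballI)
    fix k
    show "dg_hom (D11 n) k \<subseteq> dg_car (D11 n)" by (auto simp: D11_def)
    have z: "op_zero \<in> dg_hom (D11 n) k" unfolding hom_blk
      using zero_Dops by (simp add: op_zero_def bA_def bB_def bC_def bD_def fun_eq_iff)
    have e: "dg_zero (D11 n) = op_zero" by (simp add: D11_def)
    show "dg_zero (D11 n) \<in> dg_hom (D11 n) k" using z by (simp only: e)
    fix c a b assume "a \<in> dg_hom (D11 n) k" "b \<in> dg_hom (D11 n) k"
    moreover have "dg_add (D11 n) = op_add" by (simp add: D11_def)
    ultimately show "dg_add (D11 n) a b \<in> dg_hom (D11 n) k"
      using Dops.add_in[of a b] unfolding hom_blk op_add_eq
      by (auto simp: bparts_add split: if_splits)
  next
    fix k c a assume "a \<in> dg_hom (D11 n) k"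
    moreover have "dg_smult (D11 n) = op_smult" by (simp add: D11_def)
    ultimately show "dg_smult (D11 n) c a \<in> dg_hom (D11 n) k"
      using Dops.smult_in[of a c] unfolding hom_blk
      by (auto simp: bparts_smult split: if_splits)
  qed
  show "\<forall>a\<in>dg_car (D11 n). \<exists>!f. (\<forall>k. f k \<in> dg_hom (D11 n) k)
        \<and> finite {k. f k \<noteq> dg_zero (D11 n)} \<and> a = dg_sum (D11 n) f"
  proof
    fix a assume "a \<in> dg_car (D11 n)"
    hence a: "a \<in> Dops" by (simp add: D11_def)
    show "\<exists>!f. (\<forall>k. f k \<in> dg_hom (D11 n) k) \<and> finite {k. f k \<noteq> dg_zero (D11 n)} \<and> a = dg_sum (D11 n) f"
    proof (rule ex1I[of _ "compo a"])
      show "(\<forall>k. compo a k \<in> dg_hom (D11 n) k) \<and> finite {k. compo a k \<noteq> dg_zero (D11 n)}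
          \<and> a = dg_sum (D11 n) (compo a)"
        using compo_hom[OF a] compo_supp[of a] compo_sum[OF a, of n]
        by (auto simp: D11_def intro: finite_subset)
    next
      fix f assume "(\<forall>k. f k \<in> dg_hom (D11 n) k) \<and> finite {k. f k \<noteq> dg_zero (D11 n)} \<and> a = dg_sum (D11 n) f"
      thus "f = compo a" using decomp_unique[OF a] by blast
    qed
  qed
  show "\<forall>k l. \<forall>a\<in>dg_hom (D11 n) k. \<forall>b\<in>dg_hom (D11 n) l. dg_mult (D11 n) a b \<in> dg_hom (D11 n) (k + l)"
  proof (intro allI ballI)
    fix k l a b assume a: "a \<in> dg_hom (D11 n) k" and b: "b \<in> dg_hom (D11 n) l"
    have "a (b v) \<in> sv_deg (j + (k + l))" if "v \<in> sv_deg j" for j v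
    proof -
      have "b v \<in> sv_deg (j + l)" using b that by (simp add: D11_def)
      hence "a (b v) \<in> sv_deg (j + l + k)" using a by (simp add: D11_def)
      thus ?thesis by (simp add: ac_simps)
    qed
    thus "dg_mult (D11 n) a b \<in> dg_hom (D11 n) (k + l)" using a b by (auto simp: D11_def Dops.intros)
  qed
  show "dg_one (D11 n) \<in> dg_hom (D11 n) 0" by (simp add: D11_def Dops.intros)
  show "\<forall>k. \<forall>a\<in>dg_hom (D11 n) k. dg_d (D11 n) a \<in> dg_hom (D11 n) (k + 1)"
  proof -
    have e: "dg_d (D11 n) = dD n" by (simp add: D11_def)
    show ?thesis unfolding e using dD_hom by blast
  qed
  show "\<forall>a\<in>dg_car (D11 n). dg_d (D11 n) a \<in> dg_car (D11 n)"
    by (simp add: D11_def dD_Dops)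
  show "\<forall>a\<in>dg_car (D11 n). \<forall>b\<in>dg_car (D11 n). dg_d (D11 n) (dg_add (D11 n) a b) = dg_add (D11 n) (dg_d (D11 n) a) (dg_d (D11 n) b)"
    by (simp add: D11_def dD_alt op_add_eq fun_eq_iff P_add Qop_eval' Dops_add distrib_left)
  show "\<forall>c. \<forall>a\<in>dg_car (D11 n). dg_d (D11 n) (dg_smult (D11 n) c a) = dg_smult (D11 n) c (dg_d (D11 n) a)"
    by (simp add: D11_def dD_alt op_smult_eq fun_eq_iff P_eval Qop_eval' Dops_sm sm_def smult_diff_right)
  show "\<forall>a\<in>dg_car (D11 n). dg_d (D11 n) (dg_d (D11 n) a) = dg_zero (D11 n)"
    by (simp add: D11_def dd_zero)
  show "\<forall>k. \<forall>a\<in>dg_hom (D11 n) k. \<forall>b\<in>dg_car (D11 n).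
        dg_d (D11 n) (dg_mult (D11 n) a b) =
          dg_add (D11 n) (dg_mult (D11 n) (dg_d (D11 n) a) b)
                   (dg_smult (D11 n) ((-1) ^ nat \<bar>k\<bar>) (dg_mult (D11 n) a (dg_d (D11 n) b)))"
  proof -
    have e: "dg_d (D11 n) = dD n" "dg_mult (D11 n) = (\<circ>)" "dg_add (D11 n) = op_add"
      "dg_smult (D11 n) = op_smult" "dg_car (D11 n) = Dops" by (simp_all add: D11_def)
    show ?thesis unfolding e using leibniz_D by blast
  qed
qed


lemma Xn_monom: "[:0, 1:] ^ n = (monom 1 n :: complex poly)"
  by (simp add: monom_altdef)

definition nf :: "(nat \<Rightarrow> complex poly) \<Rightarrow> nat \<Rightarrow> pop" where
  "nf a N = (\<lambda>p. \<Sum>i<N. a i * (pderiv ^^ i) p)"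

lemma nf_ext: "N \<le> K \<Longrightarrow> nf a N = nf (\<lambda>i. if i < N then a i else 0) K"
proof (rule ext)
  fix p assume "N \<le> K"
  have "(\<Sum>i<K. (if i < N then a i else 0) * (pderiv ^^ i) p) = (\<Sum>i<N. (if i < N then a i else 0) * (pderiv ^^ i) p)"
    by (rule sum.mono_neutral_right) (use \<open>N \<le> K\<close> in auto)
  thus "nf a N p = nf (\<lambda>i. if i < N then a i else 0) K p" by (simp add: nf_def)
qed

lemma nf_add: "\<exists>c K. (\<lambda>p. nf a N p + nf b M p) = nf c K"
proof -
  let ?K = "max N M"
  have "nf a N = nf (\<lambda>i. if i < N then a i else 0) ?K" "nf b M = nf (\<lambda>i. if i < M then b i else 0) ?K"
    by (auto intro: nf_ext)
  hence "(\<lambda>p. nf a N p + nf b M p) = nf (\<lambda>i. (if i < N then a i else 0) + (if i < M then b i else 0)) ?K"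
    by (simp add: nf_def fun_eq_iff sum.distrib distrib_right)
  thus ?thesis by blast
qed

lemma pderiv_sum: "pderiv (sum f A) = (\<Sum>x\<in>A. pderiv (f x))"
  by (induction A rule: infinite_finite_induct) (auto simp: pderiv_add)

lemma smult_sum': "Polynomial.smult c (sum f A) = (\<Sum>x\<in>A. Polynomial.smult c (f x))"
  by (induction A rule: infinite_finite_induct) (auto simp: smult_add_right)

lemma nf_lmult: "(\<lambda>p. c * p) \<circ> nf a N = nf (\<lambda>i. c * a i) N"
  by (simp add: fun_eq_iff nf_def sum_distrib_left mult.assoc)

lemma nf_pderiv: "\<exists>b M. (\<lambda>p. pderiv (nf a N p)) = nf b M"
proof -
  define c where "c i = (if i < N then pderiv (a i) else 0)" for i
  define e where "e i = (case i of 0 \<Rightarrow> 0 | Suc j \<Rightarrow> a j)" for i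
  have "pderiv (nf a N p) = nf (\<lambda>i. c i + e i) (Suc N) p" for p
  proof -
    have "pderiv (nf a N p) = (\<Sum>i<N. pderiv (a i) * (pderiv ^^ i) p) + (\<Sum>i<N. a i * (pderiv ^^ Suc i) p)"
      by (simp add: nf_def pderiv_sum pderiv_mult sum.distrib algebra_simps)
    also have "(\<Sum>i<N. pderiv (a i) * (pderiv ^^ i) p) = (\<Sum>i<Suc N. c i * (pderiv ^^ i) p)"
      by (simp add: c_def)
    also have "(\<Sum>i<N. a i * (pderiv ^^ Suc i) p) = (\<Sum>i<Suc N. e i * (pderiv ^^ i) p)"
      by (subst sum.lessThan_Suc_shift) (simp add: e_def del: funpow.simps)
    finally show ?thesis by (simp add: nf_def sum.distrib distrib_right)
  qed
  thus ?thesis by blast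
qed

lemma nf_comp: "f \<in> Wset \<Longrightarrow> \<forall>a N. \<exists>b M. f \<circ> nf a N = nf b M"
proof (induction rule: Wset.induct)
  case w_id then show ?case by auto
next
  case w_x
  show ?case
  proof (intro allI)
    fix a N
    have "(\<lambda>p. [:0, 1:] * p) \<circ> nf a N = nf (\<lambda>i. [:0, 1:] * a i) N"
      by (rule nf_lmult)
    thus "\<exists>b M. (\<lambda>p. [:0, 1:] * p) \<circ> nf a N = nf b M" by blast
  qed
next
  case w_d
  show ?case using nf_pderiv by (simp add: o_def)
next
  case (w_add f g)
  show ?case
  proof (intro allI)
    fix a N
    obtain b M b' M' where "f \<circ> nf a N = nf b M" "g \<circ> nf a N = nf b' M'" using w_add.IH by blast
    hence "(\<lambda>p. f p + g p) \<circ> nf a N = (\<lambda>p. nf b M p + nf b' M' p)" by (simp add: fun_eq_iff o_def)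
    thus "\<exists>c K. (\<lambda>p. f p + g p) \<circ> nf a N = nf c K" using nf_add by metis
  qed
next
  case (w_smult f c)
  show ?case
  proof (intro allI)
    fix a N
    obtain b M where e: "f \<circ> nf a N = nf b M" using w_smult.IH by blast
    have "(\<lambda>p. Polynomial.smult c (f p)) \<circ> nf a N = nf (\<lambda>i. Polynomial.smult c (b i)) M"
    proof (rule ext)
      fix p
      have "f (nf a N p) = nf b M p" using e by (metis comp_apply)
      thus "((\<lambda>p. Polynomial.smult c (f p)) \<circ> nf a N) p = nf (\<lambda>i. Polynomial.smult c (b i)) M p"
        by (simp add: nf_def smult_sum')
    qed
    thus "\<exists>b M. (\<lambda>p. Polynomial.smult c (f p)) \<circ> nf a N = nf b M" by blast
  qed
next
  case (w_comp f g)
  then show ?case by (metis comp_assoc)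
qed

lemma nf_id: "nf (\<lambda>_. 1) 1 = id" by (simp add: nf_def fun_eq_iff)

lemma W_nf: "w \<in> Wset \<Longrightarrow> \<exists>a N. w = nf a N"
  using nf_comp[of w] nf_id by (metis comp_id)

lemma w_mult: "(\<lambda>p. c * p) \<in> Wset"
proof (induction c rule: pCons_induct)
  case 0 then show ?case using w_zero by simp
next
  case (pCons a c)
  have "(\<lambda>p. pCons a c * p) = (\<lambda>p. Polynomial.smult a (id p) + ((\<lambda>p. [:0, 1:] * p) \<circ> (\<lambda>p. c * p)) p)"
    by (simp add: fun_eq_iff)
  thus ?case by (metis w_add w_smult w_id w_x w_comp pCons(2))
qed

lemma w_pderiv_pow: "(pderiv ^^ i) \<in> Wset"
proof (induction i)
  case 0 then show ?case using w_id by (simp add: id_def)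
next
  case (Suc i)
  have "pderiv ^^ Suc i = pderiv \<circ> (pderiv ^^ i)" by simp
  then show ?case using Suc w_d w_comp by metis
qed

lemma nf_Wset: "nf a N \<in> Wset"
proof (induction N)
  case 0 then show ?case using w_zero by (simp add: nf_def)
next
  case (Suc N)
  have "nf a (Suc N) = (\<lambda>p. nf a N p + ((\<lambda>p. a N * p) \<circ> (pderiv ^^ N)) p)"
    by (simp add: nf_def fun_eq_iff)
  then show ?case using Suc w_add w_comp w_mult w_pderiv_pow by metis
qed

lemma pderiv_pow_monom1: "(pderiv ^^ l) (monom 1 i) = monom (\<Prod>s<l. of_nat (i - s)) (i - l)"
proof (induction l)
  case 0 then show ?case by simp
next
  case (Suc l)
  show ?case using Suc by (simp add: pderiv_monom mult.commute)
qed

lemma nf_dvd_coeffs: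
  fixes X :: "complex poly"
  assumes d: "\<And>p. X dvd nf a N p"
  shows "i < N \<Longrightarrow> X dvd a i"
proof (induction i rule: less_induct)
  case (less i)
  define t where "t l = a l * (pderiv ^^ l) (monom 1 i)" for l
  have tot: "X dvd (\<Sum>l<N. t l)" using d[of "monom 1 i"] by (simp add: nf_def t_def)
  have rest: "X dvd (\<Sum>l\<in>{..<N} - {i}. t l)"
  proof (rule dvd_sum)
    fix l assume l: "l \<in> {..<N} - {i}"
    show "X dvd t l"
    proof (cases "l < i")
      case True then show ?thesis using less.IH[of l] l by (simp add: t_def)
    next
      case False
      hence "i < l" using l by auto
      have z: "(\<Prod>s<l. (of_nat (i - s) :: complex)) = 0"
        by (rule prod_zero) (use \<open>i < l\<close> in \<open>auto intro!: bexI[of _ i]\<close>)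
      show ?thesis unfolding t_def pderiv_pow_monom1 z by simp
    qed
  qed
  have "(\<Sum>l<N. t l) = t i + (\<Sum>l\<in>{..<N} - {i}. t l)"
    using less.prems by (simp add: sum.remove)
  hence "X dvd t i" using tot rest by (metis dvd_add_left_iff)
  moreover have "t i = Polynomial.smult (\<Prod>s<i. of_nat (i - s)) (a i)"
    by (simp add: t_def pderiv_pow_monom1 monom_0 mult.commute)
  moreover have "(\<Prod>s<i. (of_nat (i - s) :: complex)) \<noteq> 0" by (simp add: prod_zero_iff)
  ultimately show ?case by (simp add: dvd_smult_cancel)
qed


definition opth :: "complex poly \<Rightarrow> pop" where
  "opth f p = (\<Sum>k\<le>degree p. monom (poly f (of_nat k) * coeff p k) k)"

lemma coeff_opth: "coeff (opth f p) k = poly f (of_nat k) * coeff p k"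
  by (cases "k \<le> degree p") (auto simp: opth_def coeff_sum coeff_monom coeff_eq_0)

lemma opth_Wset: "opth f \<in> Wset"
proof (induction f rule: pCons_induct)
  case 0
  have "opth 0 = (\<lambda>_. 0)" by (rule ext, rule poly_eqI) (simp add: coeff_opth)
  then show ?case using w_zero by simp
next
  case (pCons c g)
  have "opth (pCons c g) = (\<lambda>p. Polynomial.smult c (id p) + ((\<lambda>p. [:0, 1:] * p) \<circ> (pderiv \<circ> opth g)) p)"
  proof (rule ext, rule poly_eqI)
    fix p k
    show "coeff (opth (pCons c g) p) k =
      coeff (Polynomial.smult c (id p) + ((\<lambda>p. [:0, 1:] * p) \<circ> (pderiv \<circ> opth g)) p) k"
      by (cases k) (simp_all add: coeff_opth coeff_pderiv algebra_simps)
  qed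
  then show ?case by (metis w_add w_smult w_id w_x w_d w_comp pCons(2))
qed

lemma coeff_Xn: "coeff (monom 1 n * (q :: complex poly)) k = (if k < n then 0 else coeff q (k - n))"
  by (simp add: coeff_monom_mult)

definition pP :: "nat \<Rightarrow> complex poly" where
  "pP n = (\<Prod>i<n. [:of_int (1 - int n + int i), 1:])"
definition pQ :: "nat \<Rightarrow> nat \<Rightarrow> complex poly" where
  "pQ n m = (\<Prod>i<n. [:of_int (int m + 1 + int i), 1:])"

lemma poly_pP: "poly (pP n) x = pochhammer (x - of_nat n + 1) n"
  by (simp add: pP_def poly_prod pochhammer_prod atLeast0LessThan algebra_simps)

lemma poly_pQ: "poly (pQ n m) x = pochhammer (x + of_nat m + 1) n"
  by (simp add: pQ_def poly_prod pochhammer_prod atLeast0LessThan algebra_simps)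

lemma coprime_lin: "a \<noteq> b \<Longrightarrow> coprime [:a, 1:] [:b, 1 :: complex:]"
proof (rule coprimeI)
  fix c assume ab: "a \<noteq> b" and c: "c dvd [:a, 1:]" "c dvd [:b, 1:]"
  from c(1) c(2) have "c dvd [:a, 1:] - [:b, 1:]" by (rule dvd_diff)
  hence "c dvd [:a - b:]" by simp
  moreover have "is_unit [:a - b:]" using ab by (intro is_unit_triv) simp
  ultimately show "is_unit c" using dvd_unit_imp_unit by blast
qed

lemma ne_aux: "i < n \<Longrightarrow> (of_nat i :: complex) - of_nat n \<noteq> of_nat m + of_nat j"
proof
  assume i: "i < n" and eq: "(of_nat i :: complex) - of_nat n = of_nat m + of_nat j"
  have "(of_nat i :: complex) = of_nat m + of_nat j + of_nat n" using eq by (simp add: diff_eq_eq)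
  hence "(of_nat i :: complex) = of_nat (m + j + n)" by simp
  hence "i = m + j + n" by (simp only: of_nat_eq_iff)
  thus False using i by simp
qed

lemma coprime_PQ: "coprime (pP n) (pQ n m)"
  unfolding pP_def pQ_def
  by (intro prod_coprime_left prod_coprime_right coprime_lin) (auto dest: ne_aux)

lemma pP_zero: "k < n \<Longrightarrow> poly (pP n) (of_nat k) = 0"
proof -
  assume "k < n"
  hence "(of_nat k - of_nat n + 1 :: complex) = - of_nat (n - 1 - k)" by (simp add: of_nat_diff)
  thus ?thesis using \<open>k < n\<close> by (simp add: poly_pP pochhammer_eq_0_iff) (intro exI[of _ "n - 1 - k"], auto)
qed

lemma pderiv_cob:
  "\<exists>A D. A \<in> Wset \<and> D \<in> Wset \<and> (\<forall>q. (pderiv ^^ m) q = monom 1 n * D q - A (monom 1 n * q))"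
proof -
  obtain G H where GH: "bezout_coefficients (pP n) (pQ n m) = (G, H)" by fastforce
  have bz: "G * pP n + H * pQ n m = 1"
    using bezout_coefficients[OF GH] coprime_imp_gcd_eq_1[OF coprime_PQ] by simp
  define D where "D = opth (pcompose G [:of_nat n, 1:]) \<circ> (pderiv ^^ (n + m))"
  define A where "A = (\<lambda>p. - opth H ((pderiv ^^ (n + m)) p))"
  have DW: "D \<in> Wset" unfolding D_def by (intro w_comp opth_Wset w_pderiv_pow)
  have AW: "A \<in> Wset" unfolding A_def using w_neg[OF w_comp[OF opth_Wset w_pderiv_pow]] by (simp add: o_def)
  have "(pderiv ^^ m) q = monom 1 n * D q - A (monom 1 n * q)" for q
  proof (rule poly_eqI)
    fix k
    define c where "c = pochhammer (of_nat (Suc k) :: complex) m * coeff q (k + m)"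
    have p1: "pochhammer (of_nat (Suc k) :: complex) (n + m) = pochhammer (of_nat (Suc k)) m * poly (pQ n m) (of_nat k)"
      by (simp add: poly_pQ pochhammer_product' add.commute[of n m] algebra_simps)
    have cx: "coeff (monom 1 n * q) (k + (n + m)) = coeff q (k + m)" by (simp add: coeff_Xn)
    have "coeff (A (monom 1 n * q)) k = - (poly H (of_nat k) * (pochhammer (of_nat (Suc k)) (n + m) * coeff (monom 1 n * q) (k + (n + m))))"
      by (simp add: A_def coeff_opth coeff_higher_pderiv)
    hence t2: "coeff (A (monom 1 n * q)) k = - poly H (of_nat k) * poly (pQ n m) (of_nat k) * c"
      by (simp only: cx p1 c_def) (simp add: algebra_simps)
    have t1: "coeff (monom 1 n * D q) k = poly G (of_nat k) * poly (pP n) (of_nat k) * c"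
    proof (cases "k < n")
      case True then show ?thesis by (simp add: coeff_Xn pP_zero)
    next
      case False
      hence kn: "k - n + (n + m) = k + m" by simp
      have o: "(of_nat (k - n) :: complex) + of_nat n = of_nat k" using False by (simp add: of_nat_diff)
      have p2: "pochhammer (of_nat (Suc (k - n)) :: complex) (n + m) = poly (pP n) (of_nat k) * pochhammer (of_nat (Suc k)) m"
        using False by (simp only: pochhammer_product') (simp add: poly_pP of_nat_diff algebra_simps)
      have o': "(of_nat n :: complex) + of_nat (k - n) = of_nat k" using False by (simp add: of_nat_diff)
      have "coeff (monom 1 n * D q) k = coeff (D q) (k - n)" using False by (simp add: coeff_Xn)
      also have "\<dots> = poly (pcompose G [:of_nat n, 1:]) (of_nat (k - n)) *
          (pochhammer (of_nat (Suc (k - n))) (n + m) * coeff q (k - n + (n + m)))"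
        by (simp only: D_def comp_apply coeff_opth coeff_higher_pderiv)
      also have "\<dots> = poly G (of_nat k) * (poly (pP n) (of_nat k) * pochhammer (of_nat (Suc k)) m * coeff q (k + m))"
        unfolding p2 kn by (simp add: poly_pcompose o o')
      finally show ?thesis by (simp add: c_def algebra_simps)
    qed
    have "poly (G * pP n + H * pQ n m) (of_nat k) = 1" using bz by simp
    hence e: "poly G (of_nat k) * poly (pP n) (of_nat k) + poly H (of_nat k) * poly (pQ n m) (of_nat k) = 1" by simp
    have "coeff (monom 1 n * D q - A (monom 1 n * q)) k
       = (poly G (of_nat k) * poly (pP n) (of_nat k) + poly H (of_nat k) * poly (pQ n m) (of_nat k)) * c"
      by (simp only: coeff_diff t1 t2) (simp add: algebra_simps)
    also have "\<dots> = c" by (simp add: e)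
    finally show "coeff ((pderiv ^^ m) q) k = coeff (monom 1 n * D q - A (monom 1 n * q)) k"
      by (simp add: coeff_higher_pderiv c_def)
  qed
  thus ?thesis using AW DW by blast
qed

lemma W_cob: assumes "w \<in> Wset"
  shows "\<exists>A D. A \<in> Wset \<and> D \<in> Wset \<and> (\<forall>q. w q = monom 1 n * D q - A (monom 1 n * q))"
proof -
  obtain b N where w: "w = nf b N" using W_nf[OF assms] by blast
  have "\<exists>A D. A \<in> Wset \<and> D \<in> Wset \<and> (\<forall>q. nf b N q = monom 1 n * D q - A (monom 1 n * q))"
  proof (induction N)
    case 0 then show ?case by (intro exI[of _ zf] conjI) (auto simp: nf_def w_zero)
  next
    case (Suc N)
    obtain A1 D1 where 1: "A1 \<in> Wset" "D1 \<in> Wset" "\<forall>q. nf b N q = monom 1 n * D1 q - A1 (monom 1 n * q)"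
      using Suc by blast
    obtain A2 D2 where 2: "A2 \<in> Wset" "D2 \<in> Wset" "\<forall>q. (pderiv ^^ N) q = monom 1 n * D2 q - A2 (monom 1 n * q)"
      using pderiv_cob by blast
    define A where "A = (\<lambda>p. A1 p + ((\<lambda>p. b N * p) \<circ> A2) p)"
    define D where "D = (\<lambda>p. D1 p + ((\<lambda>p. b N * p) \<circ> D2) p)"
    have "A \<in> Wset" unfolding A_def by (rule w_add[OF 1(1) w_comp[OF w_mult 2(1)]])
    moreover have "D \<in> Wset" unfolding D_def by (rule w_add[OF 1(2) w_comp[OF w_mult 2(2)]])
    moreover have "nf b (Suc N) q = monom 1 n * D q - A (monom 1 n * q)" for q
    proof -
      have e1: "nf b N q = monom 1 n * D1 q - A1 (monom 1 n * q)" using 1(3) by blast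
      have e2: "(pderiv ^^ N) q = monom 1 n * D2 q - A2 (monom 1 n * q)" using 2(3) by blast
      have "nf b (Suc N) q = nf b N q + b N * (pderiv ^^ N) q" by (simp add: nf_def)
      also have "\<dots> = monom 1 n * D q - A (monom 1 n * q)"
        unfolding e1 e2 A_def D_def by (simp add: algebra_simps)
      finally show ?thesis .
    qed
    ultimately show ?case by blast
  qed
  thus ?thesis using w by simp
qed


lemma gl_simps: "dg_car (gl_dga n) = carrier_mat n n" "dg_zero (gl_dga n) = 0\<^sub>m n n"
  "dg_one (gl_dga n) = 1\<^sub>m n" "dg_add (gl_dga n) = (+)" "dg_smult (gl_dga n) = (\<cdot>\<^sub>m)"
  "dg_mult (gl_dga n) = (*)" "dg_hom (gl_dga n) = (\<lambda>k. if k = 0 then carrier_mat n n else {0\<^sub>m n n})"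
  "dg_d (gl_dga n) = (\<lambda>_. 0\<^sub>m n n)"
  by (simp_all add: gl_dga_def)

lemma gl_sum: assumes "\<forall>k. k \<noteq> 0 \<longrightarrow> f k = 0\<^sub>m n n" and "f 0 \<in> carrier_mat n n"
  shows "dg_sum (gl_dga n) f = f 0"
proof (cases "f 0 = 0\<^sub>m n n")
  case True
  hence "{k. f k \<noteq> dg_zero (gl_dga n)} = {}" using assms by (simp add: gl_simps) metis
  then show ?thesis using True by (simp add: dg_sum_def gl_simps)
next
  case False
  hence "{k. f k \<noteq> dg_zero (gl_dga n)} = {0}" using assms by (auto simp: gl_simps)
  then show ?thesis using assms(2) by (simp add: dg_sum_def gl_simps)
qed

lemma is_dga_gl: "is_dga (gl_dga n)"
  unfolding is_dga_def gl_simps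
proof (intro conjI)
  show "\<forall>a\<in>carrier_mat n n. \<exists>!f. (\<forall>k. f k \<in> (if k = 0 then carrier_mat n n else {0\<^sub>m n n}))
        \<and> finite {k. f k \<noteq> 0\<^sub>m n n} \<and> a = dg_sum (gl_dga n) f"
  proof
    fix a :: "complex mat" assume a: "a \<in> carrier_mat n n"
    let ?f = "\<lambda>k::int. if k = 0 then a else 0\<^sub>m n n"
    show "\<exists>!f. (\<forall>k. f k \<in> (if k = 0 then carrier_mat n n else {0\<^sub>m n n}))
        \<and> finite {k. f k \<noteq> 0\<^sub>m n n} \<and> a = dg_sum (gl_dga n) f"
    proof (rule ex1I[of _ ?f])
      have "{k. ?f k \<noteq> 0\<^sub>m n n} \<subseteq> {0}" by auto
      thus "(\<forall>k. ?f k \<in> (if k = 0 then carrier_mat n n else {0\<^sub>m n n}))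
        \<and> finite {k. ?f k \<noteq> 0\<^sub>m n n} \<and> a = dg_sum (gl_dga n) ?f"
        using a gl_sum[of ?f n] by (auto intro: finite_subset)
    next
      fix f assume f: "(\<forall>k. f k \<in> (if k = 0 then carrier_mat n n else {0\<^sub>m n n}))
        \<and> finite {k. f k \<noteq> 0\<^sub>m n n} \<and> a = dg_sum (gl_dga n) f"
      hence z: "\<forall>k. k \<noteq> 0 \<longrightarrow> f k = 0\<^sub>m n n" and c: "f 0 \<in> carrier_mat n n"
        by (metis singletonD, metis)
      have "a = f 0" using f gl_sum[OF z c] by simp
      thus "f = ?f" using z by auto
    qed
  qed
qed (auto simp: assoc_add_mat comm_add_mat assoc_mult_mat mult_add_distrib_mat add_mult_distrib_mat
      mult_smult_assoc_mat mult_smult_distrib add_smult_distrib_left_mat add_smult_distrib_right_mat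
      smult_zero_mat right_mult_zero_mat left_mult_zero_mat
      intro!: eq_matI split: if_splits)


lemma zero_hom: "op_zero \<in> dg_hom (D11 n) k" unfolding hom_blk
  using zero_Dops by (simp add: op_zero_def bA_def bB_def bC_def bD_def fun_eq_iff)

lemma dD_blk: assumes a: "a \<in> Dops"
  shows "dD n a = blk (\<lambda>p. monom 1 n * bC a p) (\<lambda>q. monom 1 n * bD a q - bA a (monom 1 n * q)) zf
    (\<lambda>q. bC a (monom 1 n * q))"
proof -
  have "linop (dD n a)" using Dops_blk dD_Dops[OF a] by blast
  hence "dD n a = blk (bA (dD n a)) (bB (dD n a)) (bC (dD n a)) (bD (dD n a))" by (rule linop_eq_blk)
  thus ?thesis by (simp add: dD_parts[OF a] Xn_monom)
qed

lemma dD_zero: "dD n op_zero = op_zero"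
  by (rule ext) (simp add: dD_eval op_zero_def)

definition Ccar :: "nat \<Rightarrow> sop set" where
  "Ccar n = {a \<in> Dops. bB a = zf \<and> (\<forall>q. bA a (monom 1 n * q) = monom 1 n * bD a q)}"

definition Chom :: "nat \<Rightarrow> int \<Rightarrow> sop set" where
  "Chom n k = (if k = 0 then {a \<in> Dops. bB a = zf \<and> bC a = zf \<and> (\<forall>q. bA a (monom 1 n * q) = monom 1 n * bD a q)}
     else if 0 < k then {op_zero} else dg_hom (D11 n) k)"

definition Cdga :: "nat \<Rightarrow> sop dga" where
  "Cdga n = \<lparr>dg_car = Ccar n, dg_zero = op_zero, dg_one = id, dg_add = op_add, dg_smult = op_smult,
     dg_mult = (\<circ>), dg_hom = Chom n, dg_d = dD n\<rparr>"

lemma C_simps: "dg_car (Cdga n) = Ccar n" "dg_zero (Cdga n) = op_zero" "dg_one (Cdga n) = id"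
  "dg_add (Cdga n) = op_add" "dg_smult (Cdga n) = op_smult" "dg_mult (Cdga n) = (\<circ>)"
  "dg_hom (Cdga n) = Chom n" "dg_d (Cdga n) = dD n"
  by (simp_all add: Cdga_def)

lemma D_simps: "dg_car (D11 n) = Dops" "dg_zero (D11 n) = op_zero" "dg_one (D11 n) = id"
  "dg_add (D11 n) = op_add" "dg_smult (D11 n) = op_smult" "dg_mult (D11 n) = (\<circ>)"
  "dg_d (D11 n) = dD n"
  by (simp_all add: D11_def)

lemma dgsum_C: "dg_sum (Cdga n) f = dg_sum (D11 n) f"
  by (simp add: dg_sum_def C_simps D_simps)

lemma Dops_parts0: "a \<in> Dops \<Longrightarrow> bA a 0 = 0 \<and> bB a 0 = 0 \<and> bC a 0 = 0 \<and> bD a 0 = 0"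
  using Dops_blk Wset_wlin0 by blast

lemma Chom0_dD: "a \<in> Chom n 0 \<Longrightarrow> dD n a = op_zero"
  by (simp add: Chom_def dD_blk op_zero_blk fun_eq_iff)

lemma zero_parts: "bA op_zero = zf" "bB op_zero = zf" "bC op_zero = zf" "bD op_zero = zf"
  by (auto simp: op_zero_def bA_def bB_def bC_def bD_def fun_eq_iff)

lemma Chom_sub: "Chom n k \<subseteq> dg_hom (D11 n) k"
  using zero_hom by (auto simp: Chom_def hom_blk zero_parts zero_Dops)

lemma Ccar_zero: "op_zero \<in> Ccar n" by (simp add: Ccar_def zero_Dops zero_parts)

lemma Chom_Dops: "a \<in> Chom n k \<Longrightarrow> a \<in> Dops"
  using Chom_sub hom_blk by blast

lemma Ccar_Dops: "a \<in> Ccar n \<Longrightarrow> a \<in> Dops" by (simp add: Ccar_def)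

lemma hom_m1: "a \<in> dg_hom (D11 n) (-1) \<longleftrightarrow> a \<in> Dops \<and> bA a = zf \<and> bB a = zf \<and> bD a = zf"
  by (simp add: hom_blk)

lemma Chom_Ccar: "Chom n k \<subseteq> Ccar n"
proof
  fix a assume a: "a \<in> Chom n k"
  have D: "a \<in> Dops" using Chom_Dops[OF a] .
  consider "k = 0" | "0 < k" | "k = -1" | "k < -1" by linarith
  then show "a \<in> Ccar n"
  proof cases
    case 1 then show ?thesis using a by (auto simp: Chom_def Ccar_def)
  next
    case 2 then show ?thesis using a Ccar_zero by (simp add: Chom_def)
  next
    case 3 then show ?thesis using a by (auto simp: Chom_def Ccar_def hom_blk)
  next
    case 4 then show ?thesis using a by (auto simp: Chom_def Ccar_def hom_blk)
  qed
qed

lemma zero_Chom: "op_zero \<in> Chom n k"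
  using zero_hom zero_Dops by (auto simp: Chom_def op_zero_def bA_def bB_def bC_def bD_def fun_eq_iff)

lemma comp_parts: assumes "f \<in> Dops"
  shows "bA (f \<circ> g) = (\<lambda>p. bA f (bA g p) + bB f (bC g p))" "bB (f \<circ> g) = (\<lambda>p. bA f (bB g p) + bB f (bD g p))"
        "bC (f \<circ> g) = (\<lambda>p. bC f (bA g p) + bD f (bC g p))" "bD (f \<circ> g) = (\<lambda>p. bC f (bB g p) + bD f (bD g p))"
proof -
  have g1: "g (p, 0) = (bA g p, bC g p)" for p by (simp add: bA_def bC_def)
  have g2: "g (0, q) = (bB g q, bD g q)" for q by (simp add: bB_def bD_def)
  have e1: "bA (f \<circ> g) p = fst (f (g (p, 0)))" "bC (f \<circ> g) p = snd (f (g (p, 0)))"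
    "bB (f \<circ> g) p = fst (f (g (0, p)))" "bD (f \<circ> g) p = snd (f (g (0, p)))" for p
    by (simp_all add: bA_def bB_def bC_def bD_def)
  show "bA (f \<circ> g) = (\<lambda>p. bA f (bA g p) + bB f (bC g p))" "bB (f \<circ> g) = (\<lambda>p. bA f (bB g p) + bB f (bD g p))"
        "bC (f \<circ> g) = (\<lambda>p. bC f (bA g p) + bD f (bC g p))" "bD (f \<circ> g) = (\<lambda>p. bC f (bB g p) + bD f (bD g p))"
    by (simp_all only: fun_eq_iff e1 g1 g2 Dops_apply[OF assms] fst_conv snd_conv) simp_all
qed

lemma id_parts: "bA id = id" "bB id = zf" "bC id = zf" "bD id = id"
  by (auto simp: bA_def bB_def bC_def bD_def fun_eq_iff)

lemma Ccar_add: "a \<in> Ccar n \<Longrightarrow> b \<in> Ccar n \<Longrightarrow> op_add a b \<in> Ccar n"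
  by (auto simp: Ccar_def op_add_eq bparts_add distrib_left intro: Dops.add_in[of a b, unfolded op_add_eq])

lemma Ccar_smult: "a \<in> Ccar n \<Longrightarrow> op_smult c a \<in> Ccar n"
  by (auto simp: Ccar_def bparts_smult intro: Dops.smult_in)

lemma Ccar_comp: assumes "a \<in> Ccar n" "b \<in> Ccar n" shows "a \<circ> b \<in> Ccar n"
proof -
  have a: "a \<in> Dops" and b: "b \<in> Dops" using assms by (auto simp: Ccar_def)
  show ?thesis using assms Dops_parts0[OF a]
    by (auto simp: Ccar_def comp_parts[OF a] intro: Dops.comp_in)
qed

lemma Ccar_id: "id \<in> Ccar n" by (auto simp: Ccar_def id_parts intro: Dops.id_in)


lemma Ccar_dD: assumes "a \<in> Ccar n" shows "dD n a \<in> Ccar n"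
proof -
  have a: "a \<in> Dops" using assms by (simp add: Ccar_def)
  have e: "(\<lambda>q. monom 1 n * bD a q - bA a (monom 1 n * q)) = zf" using assms by (simp add: Ccar_def)
  show ?thesis using assms dD_Dops[OF a, of n] Dops_parts0[OF a]
    by (simp add: Ccar_def dD_blk[OF a] e)
qed

lemma hom_add: "a \<in> dg_hom (D11 n) k \<Longrightarrow> b \<in> dg_hom (D11 n) k \<Longrightarrow> op_add a b \<in> dg_hom (D11 n) k"
  using Dops.add_in[of a b] unfolding hom_blk op_add_eq
  by (auto simp: bparts_add split: if_splits)

lemma hom_smult: "a \<in> dg_hom (D11 n) k \<Longrightarrow> op_smult c a \<in> dg_hom (D11 n) k"
  using Dops.smult_in[of a c] unfolding hom_blk
  by (auto simp: bparts_smult split: if_splits)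

lemma hom_mult: assumes a: "a \<in> dg_hom (D11 n) k" and b: "b \<in> dg_hom (D11 n) l"
  shows "a \<circ> b \<in> dg_hom (D11 n) (k + l)"
proof -
  have "a (b v) \<in> sv_deg (j + (k + l))" if "v \<in> sv_deg j" for j v
  proof -
    have "b v \<in> sv_deg (j + l)" using b that by (simp add: D11_def)
    hence "a (b v) \<in> sv_deg (j + l + k)" using a by (simp add: D11_def)
    thus ?thesis by (simp add: ac_simps)
  qed
  thus ?thesis using a b by (auto simp: D11_def Dops.intros)
qed

lemma Chom_add: "a \<in> Chom n k \<Longrightarrow> b \<in> Chom n k \<Longrightarrow> op_add a b \<in> Chom n k"
proof -
  assume a: "a \<in> Chom n k" and b: "b \<in> Chom n k"
  consider "k = 0" | "0 < k" | "k < 0" by linarith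
  then show ?thesis
  proof cases
    case 1 then show ?thesis using a b Dops.add_in[of a b]
      by (auto simp: Chom_def op_add_eq bparts_add distrib_left fun_eq_iff)
  next
    case 2 then show ?thesis using a b by (simp add: Chom_def op_add_eq op_zero_eq)
  next
    case 3
    then show ?thesis using a b hom_add by (simp add: Chom_def)
  qed
qed

lemma Chom_smult: "a \<in> Chom n k \<Longrightarrow> op_smult c a \<in> Chom n k"
proof -
  assume a: "a \<in> Chom n k"
  consider "k = 0" | "0 < k" | "k < 0" by linarith
  then show ?thesis
  proof cases
    case 1 then show ?thesis using a Dops.smult_in[of a c]
      by (auto simp: Chom_def bparts_smult fun_eq_iff)
  next
    case 2 then show ?thesis using a by (simp add: Chom_def op_smult_def op_zero_def)
  next
    case 3
    then show ?thesis using a hom_smult by (simp add: Chom_def)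
  qed
qed

lemma Chom_dD: assumes a: "a \<in> Chom n k" shows "dD n a \<in> Chom n (k + 1)"
proof -
  consider "k = 0" | "0 < k" | "k = -1" | "k < -1" by linarith
  then show ?thesis
  proof cases
    case 1 then show ?thesis using Chom0_dD[of a n] a zero_Chom by simp
  next
    case 2 then show ?thesis using a by (simp add: Chom_def dD_zero)
  next
    case 3
    have h: "dD n a \<in> dg_hom (D11 n) 0" using dD_hom[of a n k] a 3 by (simp add: Chom_def)
    have "dD n (dD n a) = op_zero" using dd_zero Chom_Dops[OF a] by blast
    hence "dD n a \<in> Chom n 0" using h dD_Dops[OF Chom_Dops[OF a]]
      by (auto simp: Chom_def hom_blk dD_blk[OF dD_Dops[OF Chom_Dops[OF a]]] op_zero_blk fun_eq_iff)
    then show ?thesis using 3 by simp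
  next
    case 4 then show ?thesis using a dD_hom[of a n k] by (simp add: Chom_def)
  qed
qed

lemma Chom_mult: assumes a: "a \<in> Chom n k" and b: "b \<in> Chom n l" shows "a \<circ> b \<in> Chom n (k + l)"
proof -
  have aD: "a \<in> Dops" and bD: "b \<in> Dops" using a b Chom_Dops by auto
  have gr: "a \<circ> b \<in> dg_hom (D11 n) (k + l)"
    using hom_mult a b Chom_sub by blast
  consider "0 < k" | "0 < l" | "k = 0" "l = 0" | "k \<le> 0" "l \<le> 0" "k + l < 0" by linarith
  then show ?thesis
  proof cases
    case 1
    hence "a = op_zero" using a by (simp add: Chom_def)
    hence "a \<circ> b = op_zero" by (simp add: op_zero_def comp_def)
    then show ?thesis using zero_Chom by simp
  next
    case 2
    hence "b = op_zero" using b by (simp add: Chom_def)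
    hence "a \<circ> b = op_zero" using Dops_00[OF aD] by (simp add: op_zero_def fun_eq_iff)
    then show ?thesis using zero_Chom by simp
  next
    case 3
    then show ?thesis using a b Dops_parts0[OF aD]
      by (auto simp: Chom_def comp_parts[OF aD] intro: Dops.comp_in)
  next
    case 4 then show ?thesis using gr by (simp add: Chom_def)
  qed
qed

lemma compo_Chom: assumes a: "a \<in> Ccar n" shows "compo a k \<in> Chom n k"
proof -
  have aD: "a \<in> Dops" using a by (simp add: Ccar_def)
  consider "k = 0" | "k = 1" | "1 < k" | "k < 0" by linarith
  then show ?thesis
  proof cases
    case 1 then show ?thesis using compo_hom[OF aD, of 0 n] a
      by (simp add: Chom_def hom_blk compo_def Ccar_def Dops_parts0[OF aD])
  next
    case 2 then show ?thesis using a by (simp add: Chom_def compo_def Ccar_def op_zero_blk)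
  next
    case 3 then show ?thesis by (simp add: Chom_def compo_def)
  next
    case 4 then show ?thesis using compo_hom[OF aD, of k n] by (simp add: Chom_def)
  qed
qed

lemma is_dga_C: "is_dga (Cdga n)"
proof -
  show ?thesis unfolding is_dga_def C_simps
  proof (intro conjI)
    show "op_zero \<in> Ccar n" by (rule Ccar_zero)
    show "\<forall>a\<in>Ccar n. \<forall>b\<in>Ccar n. op_add a b \<in> Ccar n" using Ccar_add by blast
    show "\<forall>c. \<forall>a\<in>Ccar n. op_smult c a \<in> Ccar n" using Ccar_smult by blast
    show "id \<in> Ccar n" by (rule Ccar_id)
    show "\<forall>a\<in>Ccar n. \<forall>b\<in>Ccar n. a \<circ> b \<in> Ccar n" using Ccar_comp by blast
    show "\<forall>a\<in>Ccar n. \<exists>!f. (\<forall>k. f k \<in> Chom n k) \<and> finite {k. f k \<noteq> op_zero} \<and> a = dg_sum (Cdga n) f"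
    proof
      fix a assume a: "a \<in> Ccar n"
      hence aD: "a \<in> Dops" by (rule Ccar_Dops)
      show "\<exists>!f. (\<forall>k. f k \<in> Chom n k) \<and> finite {k. f k \<noteq> op_zero} \<and> a = dg_sum (Cdga n) f"
      proof (rule ex1I[of _ "compo a"])
        show "(\<forall>k. compo a k \<in> Chom n k) \<and> finite {k. compo a k \<noteq> op_zero} \<and> a = dg_sum (Cdga n) (compo a)"
          using compo_Chom[OF a] compo_supp[of a] compo_sum[OF aD, of n]
          by (auto simp: dgsum_C intro: finite_subset)
      next
        fix f assume "(\<forall>k. f k \<in> Chom n k) \<and> finite {k. f k \<noteq> op_zero} \<and> a = dg_sum (Cdga n) f"
        thus "f = compo a" using decomp_unique[OF aD, of f n] Chom_sub by (auto simp: dgsum_C)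
      qed
    qed
    show "\<forall>k. Chom n k \<subseteq> Ccar n \<and> op_zero \<in> Chom n k \<and> (\<forall>a\<in>Chom n k. \<forall>b\<in>Chom n k. op_add a b \<in> Chom n k)
        \<and> (\<forall>c. \<forall>a\<in>Chom n k. op_smult c a \<in> Chom n k)"
      using Chom_Ccar zero_Chom Chom_add Chom_smult by blast
    show "\<forall>k l. \<forall>a\<in>Chom n k. \<forall>b\<in>Chom n l. a \<circ> b \<in> Chom n (k + l)" using Chom_mult by blast
    show "id \<in> Chom n 0" by (simp add: Chom_def id_parts Dops.id_in)
    show "\<forall>k. \<forall>a\<in>Chom n k. dD n a \<in> Chom n (k + 1)" using Chom_dD by blast
    show "\<forall>a\<in>Ccar n. dD n a \<in> Ccar n" using Ccar_dD by blast
    show "\<forall>a\<in>Ccar n. \<forall>b\<in>Ccar n. \<forall>c\<in>Ccar n. op_add (op_add a b) c = op_add a (op_add b c)"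
      by (simp add: op_add_eq add.assoc)
    show "\<forall>a\<in>Ccar n. \<forall>b\<in>Ccar n. op_add a b = op_add b a"
      by (simp add: op_add_eq add.commute)
    show "\<forall>a\<in>Ccar n. op_add a op_zero = a"
      by (simp add: op_add_eq op_zero_eq)
    show "\<forall>a\<in>Ccar n. op_add a (op_smult (-1) a) = op_zero"
      by (simp add: op_add_eq op_zero_eq op_smult_eq sm_m1 fun_eq_iff)
    show "\<forall>a\<in>Ccar n. op_smult 1 a = a"
      by (simp add: op_smult_eq sm_1)
    show "\<forall>c e. \<forall>a\<in>Ccar n. op_smult (c * e) a = op_smult c (op_smult e a)"
      by (simp add: op_smult_eq sm_def)
    show "\<forall>c e. \<forall>a\<in>Ccar n. op_smult (c + e) a = op_add (op_smult c a) (op_smult e a)"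
      by (simp add: op_smult_eq op_add_eq sm_def fun_eq_iff smult_add_left)
    show "\<forall>c. \<forall>a\<in>Ccar n. \<forall>b\<in>Ccar n. op_smult c (op_add a b) = op_add (op_smult c a) (op_smult c b)"
      by (simp add: op_smult_eq op_add_eq sm_def fun_eq_iff smult_add_right)
    show "\<forall>a\<in>Ccar n. \<forall>b\<in>Ccar n. \<forall>c\<in>Ccar n. a \<circ> b \<circ> c = a \<circ> (b \<circ> c)"
      by (simp add: o_assoc)
    show "\<forall>a\<in>Ccar n. id \<circ> a = a \<and> a \<circ> id = a" by simp
    show "\<forall>a\<in>Ccar n. \<forall>b\<in>Ccar n. \<forall>c\<in>Ccar n. a \<circ> op_add b c = op_add (a \<circ> b) (a \<circ> c)
        \<and> op_add a b \<circ> c = op_add (a \<circ> c) (b \<circ> c)"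
      using Ccar_Dops by (simp add: op_add_eq fun_eq_iff Dops_add)
    show "\<forall>e. \<forall>a\<in>Ccar n. \<forall>b\<in>Ccar n. op_smult e a \<circ> b = op_smult e (a \<circ> b) \<and> a \<circ> op_smult e b = op_smult e (a \<circ> b)"
      using Ccar_Dops by (simp add: op_smult_eq fun_eq_iff Dops_sm)
    show "\<forall>a\<in>Ccar n. \<forall>b\<in>Ccar n. dD n (op_add a b) = op_add (dD n a) (dD n b)"
      using Ccar_Dops by (simp add: dD_alt op_add_eq fun_eq_iff P_add Qop_eval' Dops_add distrib_left)
    show "\<forall>c. \<forall>a\<in>Ccar n. dD n (op_smult c a) = op_smult c (dD n a)"
      using Ccar_Dops by (simp add: dD_alt op_smult_eq fun_eq_iff P_eval Qop_eval' Dops_sm sm_def smult_diff_right)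
    show "\<forall>a\<in>Ccar n. dD n (dD n a) = op_zero"
      using Ccar_Dops dd_zero by blast
    show "\<forall>k. \<forall>a\<in>Chom n k. \<forall>b\<in>Ccar n. dD n (a \<circ> b) = op_add (dD n a \<circ> b) (op_smult ((-1) ^ nat \<bar>k\<bar>) (a \<circ> dD n b))"
      using leibniz_D Chom_sub Ccar_Dops by blast
  qed
qed


lemma dD_zero0: "dD n 0 = 0" using dD_zero[of n] by (simp add: op_zero_eq)

lemma Chom0_iff: "a \<in> Chom n 0 \<longleftrightarrow> a \<in> dg_hom (D11 n) 0 \<and> dD n a = op_zero"
proof
  assume "a \<in> Chom n 0" thus "a \<in> dg_hom (D11 n) 0 \<and> dD n a = op_zero"
    using Chom_sub Chom0_dD by blast
next
  assume h: "a \<in> dg_hom (D11 n) 0 \<and> dD n a = op_zero"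
  hence a: "a \<in> Dops" and p: "bB a = zf" "bC a = zf" by (auto simp: hom_blk)
  have "bB (dD n a) = zf" using h zero_parts by simp
  hence "\<forall>q. monom 1 n * bD a q - bA a (monom 1 n * q) = 0"
    by (simp add: dD_blk[OF a] fun_eq_iff p)
  thus "a \<in> Chom n 0" using a p by (simp add: Chom_def)
qed

lemma qiso_id: "dga_qiso id (Cdga n) (D11 n)"
  unfolding dga_qiso_def
proof (intro conjI)
  show "is_dga (Cdga n)" by (rule is_dga_C)
  show "is_dga (D11 n)" by (rule is_dga_D)
  show "dga_hom id (Cdga n) (D11 n)"
    unfolding dga_hom_def C_simps D_simps using Ccar_Dops Chom_sub by (simp add: subset_iff)
  show "\<forall>k. \<forall>z\<in>dg_cocycles (Cdga n) k. id z \<in> dg_coboundaries (D11 n) k \<longrightarrow> z \<in> dg_coboundaries (Cdga n) k"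
  proof (intro allI ballI impI)
    fix k z assume z: "z \<in> dg_cocycles (Cdga n) k" and c: "id z \<in> dg_coboundaries (D11 n) k"
    show "z \<in> dg_coboundaries (Cdga n) k"
    proof (cases "k \<le> 0")
      case True
      hence "Chom n (k - 1) = dg_hom (D11 n) (k - 1)" by (simp add: Chom_def)
      thus ?thesis using c by (simp add: dg_coboundaries_def C_simps D_simps)
    next
      case False
      hence "z = op_zero" using z by (simp add: dg_cocycles_def C_simps Chom_def)
      thus ?thesis unfolding dg_coboundaries_def C_simps using image_eqI[of op_zero "dD n" op_zero "Chom n (k - 1)", OF dD_zero[symmetric] zero_Chom] by simp
    qed
  qed
  show "\<forall>k. \<forall>w\<in>dg_cocycles (D11 n) k. \<exists>z\<in>dg_cocycles (Cdga n) k. \<exists>b\<in>dg_hom (D11 n) (k - 1).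
          w = dg_add (D11 n) (id z) (dg_d (D11 n) b)"
  proof (intro allI ballI)
    fix k w assume w: "w \<in> dg_cocycles (D11 n) k"
    hence wh: "w \<in> dg_hom (D11 n) k" and wd: "dD n w = op_zero" by (auto simp: dg_cocycles_def D_simps)
    have wD: "w \<in> Dops" using wh hom_blk by blast
    consider "k \<le> 0" | "k = 1" | "1 < k" by linarith
    then show "\<exists>z\<in>dg_cocycles (Cdga n) k. \<exists>b\<in>dg_hom (D11 n) (k - 1).
          w = dg_add (D11 n) (id z) (dg_d (D11 n) b)"
    proof cases
      case 1
      have "w \<in> Chom n k" using 1 wh wd Chom0_iff[of w n] by (cases "k = 0") (auto simp: Chom_def)
      hence "w \<in> dg_cocycles (Cdga n) k" using wd by (simp add: dg_cocycles_def C_simps)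
      moreover have "w = dg_add (D11 n) (id w) (dg_d (D11 n) op_zero)"
        by (simp add: D_simps dD_zero dD_zero0 op_add_eq op_zero_eq)
      ultimately show ?thesis using zero_hom by blast
    next
      case 2
      have p: "bA w = zf" "bC w = zf" "bD w = zf" using wh 2 by (auto simp: hom_blk)
      have bW: "bB w \<in> Wset" using Dops_blk[OF wD] by blast
      obtain A D where AD: "A \<in> Wset" "D \<in> Wset" "\<forall>q. bB w q = monom 1 n * D q - A (monom 1 n * q)"
        using W_cob[OF bW] by blast
      define b where "b = blk A zf zf D"
      have A0: "A 0 = 0" "D 0 = 0" using AD Wset_wlin0 by auto
      have bD: "b \<in> Dops" unfolding b_def using AD by (intro blk_Dops w_zero)
      have bh: "b \<in> dg_hom (D11 n) 0" using bD by (simp add: hom_blk b_def A0)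
      have "dD n b = blk (\<lambda>p. monom 1 n * bC b p) (\<lambda>q. monom 1 n * bD b q - bA b (monom 1 n * q)) zf
          (\<lambda>q. bC b (monom 1 n * q))" by (rule dD_blk[OF bD])
      also have "\<dots> = blk zf (bB w) zf zf"
        using AD(3) by (simp add: b_def A0 fun_eq_iff)
      also have "\<dots> = w" using linop_eq_blk[of w] Dops_blk[OF wD] p by simp
      finally have "w = dg_add (D11 n) (id op_zero) (dg_d (D11 n) b)"
        by (simp add: D_simps op_add_eq op_zero_eq)
      moreover have "op_zero \<in> dg_cocycles (Cdga n) k"
        using zero_Chom dD_zero by (simp add: dg_cocycles_def C_simps)
      ultimately show ?thesis using bh 2 by force
    next
      case 3
      hence "w = op_zero" using hom_zero_big[OF wh] by simp
      hence "w = dg_add (D11 n) (id op_zero) (dg_d (D11 n) op_zero)"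
        by (simp add: D_simps dD_zero dD_zero0 op_add_eq op_zero_eq)
      moreover have "op_zero \<in> dg_cocycles (Cdga n) k"
        using zero_Chom dD_zero by (simp add: dg_cocycles_def C_simps)
      ultimately show ?thesis using zero_hom by blast
    qed
  qed
qed


definition cpair :: "nat \<Rightarrow> pop \<Rightarrow> pop \<Rightarrow> bool" where
  "cpair n A D \<longleftrightarrow> A \<in> Wset \<and> D \<in> Wset \<and> (\<forall>q. A (monom 1 n * q) = monom 1 n * D q)"

lemma cpair_comp: "cpair n A D \<Longrightarrow> cpair n A' D' \<Longrightarrow> cpair n (A \<circ> A') (D \<circ> D')"
  by (simp add: cpair_def w_comp)

lemma cpair_id: "cpair n id id" by (simp add: cpair_def w_id)

lemma cpair_mult: "cpair n (\<lambda>p. c * p) (\<lambda>p. c * p)"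
  by (simp add: cpair_def w_mult mult.left_commute)

lemma opth_monom: "opth f (monom d t) = monom (poly f (of_nat t) * d) t"
  by (rule poly_eqI) (simp add: coeff_opth coeff_monom)

lemma cpair_th: "cpair n (opth f) (opth (pcompose f [:of_nat n, 1:]))"
  unfolding cpair_def
proof (intro conjI opth_Wset allI)
  fix q
  show "opth f (monom 1 n * q) = monom 1 n * opth (f \<circ>\<^sub>p [:of_nat n, 1:]) q"
  proof (rule poly_eqI)
    fix k
    show "coeff (opth f (monom 1 n * q)) k = coeff (monom 1 n * opth (f \<circ>\<^sub>p [:of_nat n, 1:]) q) k"
      by (cases "k < n") (auto simp: coeff_opth coeff_Xn poly_pcompose of_nat_diff)
  qed
qed

definition Low :: "nat \<Rightarrow> pop" where "Low n = opth [:1 - of_nat n, 1:] \<circ> pderiv"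
definition LowD :: "nat \<Rightarrow> pop" where "LowD n = opth [:of_nat n + 1, 1:] \<circ> pderiv"

lemma cpair_low: "cpair n (Low n) (LowD n)"
  unfolding cpair_def Low_def LowD_def
proof (intro conjI w_comp opth_Wset w_d allI)
  fix q
  show "(opth [:1 - of_nat n, 1:] \<circ> pderiv) (monom 1 n * q) = monom 1 n * (opth [:of_nat n + 1, 1:] \<circ> pderiv) q"
  proof (rule poly_eqI)
    fix k
    consider "n \<le> k" | "Suc k = n" | "Suc k < n" by linarith
    then show "coeff ((opth [:1 - of_nat n, 1:] \<circ> pderiv) (monom 1 n * q)) k =
      coeff (monom 1 n * (opth [:of_nat n + 1, 1:] \<circ> pderiv) q) k"
    proof cases
      case 1
      hence e: "Suc k - n = Suc (k - n)" by simp
      have c1: "coeff (monom 1 n * q) (Suc k) = coeff q (Suc (k - n))" using 1 by (simp add: coeff_Xn e)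
      have c2: "coeff (monom 1 n * (opth [:of_nat n + 1, 1:] \<circ> pderiv) q) k
         = poly [:of_nat n + 1, 1:] (of_nat (k - n)) * (of_nat (Suc (k - n)) * coeff q (Suc (k - n)))"
        using 1 by (simp add: coeff_Xn coeff_opth coeff_pderiv)
      have c3: "coeff ((opth [:1 - of_nat n, 1:] \<circ> pderiv) (monom 1 n * q)) k
         = poly [:1 - of_nat n, 1:] (of_nat k) * (of_nat (Suc k) * coeff q (Suc (k - n)))"
        by (simp only: comp_apply coeff_opth coeff_pderiv c1)
      show ?thesis unfolding c2 c3 using 1 by (simp add: of_nat_diff algebra_simps)
    next
      case 2
      hence "(1 - of_nat n + of_nat k :: complex) = 0" by (simp flip: 2)
      then show ?thesis using 2 by (simp add: coeff_opth coeff_pderiv coeff_Xn)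
    next
      case 3 then show ?thesis by (simp add: coeff_opth coeff_pderiv coeff_Xn)
    qed
  qed
qed

lemma cpair_pow: "cpair n A D \<Longrightarrow> cpair n (A ^^ m) (D ^^ m)"
proof (induction m)
  case 0 then show ?case using cpair_id by (simp add: id_def)
next
  case (Suc m)
  have "cpair n (A \<circ> A ^^ m) (D \<circ> D ^^ m)" using cpair_comp Suc by blast
  then show ?case by (simp only: funpow.simps(2))
qed

lemma cpair_lin:
  assumes "finite S" "\<forall>s\<in>S. cpair n (A s) (D s)"
  shows "cpair n (\<lambda>p. \<Sum>s\<in>S. Polynomial.smult (c s) (A s p)) (\<lambda>p. \<Sum>s\<in>S. Polynomial.smult (c s) (D s p))"
  using assms
proof (induction S rule: finite_induct)
  case empty then show ?case using w_zero by (simp add: cpair_def)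
next
  case (insert x S)
  have hx: "cpair n (A x) (D x)" and hS: "cpair n (\<lambda>p. \<Sum>s\<in>S. Polynomial.smult (c s) (A s p)) (\<lambda>p. \<Sum>s\<in>S. Polynomial.smult (c s) (D s p))"
    using insert by auto
  have W1: "(\<lambda>p. Polynomial.smult (c x) (A x p) + (\<Sum>s\<in>S. Polynomial.smult (c s) (A s p))) \<in> Wset"
    using hx hS unfolding cpair_def by (intro w_add w_smult) auto
  have W2: "(\<lambda>p. Polynomial.smult (c x) (D x p) + (\<Sum>s\<in>S. Polynomial.smult (c s) (D s p))) \<in> Wset"
    using hx hS unfolding cpair_def by (intro w_add w_smult) auto
  show ?case using insert W1 W2 hx hS unfolding cpair_def
    by (simp add: distrib_left mult_smult_right)
qed

lemma opth_0: "opth f 0 = 0" by (rule poly_eqI) (simp add: coeff_opth)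

lemma Low_monom: "Low n (monom c s) = monom ((of_nat s - of_nat n) * of_nat s * c) (s - 1)"
  by (cases s) (simp_all add: Low_def pderiv_monom opth_monom opth_0 algebra_simps)

lemma Low_pow: "m \<le> j \<Longrightarrow> j < n \<Longrightarrow> \<exists>\<kappa>. \<kappa> \<noteq> 0 \<and> (Low n ^^ m) (monom 1 j) = monom \<kappa> (j - m)"
proof (induction m)
  case 0 then show ?case by simp
next
  case (Suc m)
  then obtain \<kappa> where k: "\<kappa> \<noteq> 0" "(Low n ^^ m) (monom 1 j) = monom \<kappa> (j - m)" by auto
  have s1: "j - m - 1 = j - Suc m" by simp
  have "j - m \<noteq> n" using Suc.prems by simp
  hence "(of_nat (j - m) :: complex) \<noteq> of_nat n" by simp
  hence ne: "(of_nat (j - m) - of_nat n :: complex) \<noteq> 0" by simp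
  have ne2: "(of_nat (j - m) :: complex) \<noteq> 0" using Suc.prems by simp
  have "(Low n ^^ Suc m) (monom 1 j) = monom ((of_nat (j - m) - of_nat n) * of_nat (j - m) * \<kappa>) (j - Suc m)"
    using k by (simp add: Low_monom s1)
  moreover have "(of_nat (j - m) - of_nat n) * of_nat (j - m) * \<kappa> \<noteq> 0"
    using ne ne2 k(1) by (metis mult_eq_0_iff)
  ultimately show ?case by blast
qed

definition Rop :: "nat \<Rightarrow> nat \<Rightarrow> nat \<Rightarrow> pop" where
  "Rop n i j = (if j \<le> i then (\<lambda>p. monom 1 (i - j) * p) else Low n ^^ (j - i))"
definition Rd :: "nat \<Rightarrow> nat \<Rightarrow> nat \<Rightarrow> pop" where
  "Rd n i j = (if j \<le> i then (\<lambda>p. monom 1 (i - j) * p) else LowD n ^^ (j - i))"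

lemma cpair_R: "cpair n (Rop n i j) (Rd n i j)"
  by (simp add: Rop_def Rd_def cpair_mult cpair_pow cpair_low)

definition kap :: "nat \<Rightarrow> nat \<Rightarrow> nat \<Rightarrow> complex" where
  "kap n i j = coeff (Rop n i j (monom 1 j)) i"

lemma R_monom: assumes "i < n" "j < n"
  shows "Rop n i j (monom 1 j) = monom (kap n i j) i \<and> kap n i j \<noteq> 0"
proof (cases "j \<le> i")
  case True
  have "Rop n i j (monom 1 j) = monom 1 i" using True by (simp add: Rop_def mult_monom)
  then show ?thesis by (simp add: kap_def)
next
  case False
  obtain \<kappa> where "\<kappa> \<noteq> 0" "(Low n ^^ (j - i)) (monom 1 j) = monom \<kappa> (j - (j - i))"
    using Low_pow[of "j - i" j n] False assms by auto
  moreover have "j - (j - i) = i" using False by simp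
  ultimately have "Rop n i j (monom 1 j) = monom \<kappa> i" "\<kappa> \<noteq> 0" using False by (simp_all add: Rop_def)
  then show ?thesis by (simp add: kap_def)
qed

definition Lag :: "nat \<Rightarrow> nat \<Rightarrow> complex poly" where
  "Lag n j = Polynomial.smult (inverse (\<Prod>l\<in>{..<n} - {j}. (of_nat j - of_nat l)))
                (\<Prod>l\<in>{..<n} - {j}. [:- of_nat l, 1:])"

lemma poly_Lag: assumes "c < n" "j < n"
  shows "poly (Lag n j) (of_nat c) = (if c = j then 1 else 0)"
proof (cases "c = j")
  case True
  have "(\<Prod>l\<in>{..<n} - {j}. (of_nat j - of_nat l :: complex)) \<noteq> 0" by (simp add: prod_zero_iff)
  then show ?thesis using True by (simp add: Lag_def poly_prod)
next
  case False
  have "(\<Prod>l\<in>{..<n} - {j}. (of_nat c - of_nat l :: complex)) = 0"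
    by (rule prod_zero) (use assms False in auto)
  then show ?thesis using False by (simp add: Lag_def poly_prod)
qed

definition Aop :: "nat \<Rightarrow> nat \<Rightarrow> nat \<Rightarrow> pop" where
  "Aop n i j = Rop n i j \<circ> opth (Lag n j)"
definition Dop :: "nat \<Rightarrow> nat \<Rightarrow> nat \<Rightarrow> pop" where
  "Dop n i j = Rd n i j \<circ> opth (pcompose (Lag n j) [:of_nat n, 1:])"

lemma cpair_A: "cpair n (Aop n i j) (Dop n i j)"
  unfolding Aop_def Dop_def by (intro cpair_comp cpair_R cpair_th)

lemma Aop_monom: assumes "i < n" "j < n" "c < n"
  shows "Aop n i j (monom 1 c) = (if c = j then monom (kap n i j) i else 0)"
proof -
  have R0: "Rop n i j 0 = 0" using cpair_R[of n i j] Wset_wlin0 by (auto simp: cpair_def)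
  show ?thesis using R_monom[OF assms(1,2)] R0
    by (simp add: Aop_def opth_monom poly_Lag[OF assms(3,2)])
qed

lemma pim_blk_coeff:
  "cpair n A D \<Longrightarrow> bA (blk A zf zf D) = A"
  using Wset_wlin0 by (auto simp: cpair_def fun_eq_iff)

lemma cpair_Chom: "cpair n A D \<Longrightarrow> blk A zf zf D \<in> Chom n 0"
  using Wset_wlin0[of A] Wset_wlin0[of D] by (auto simp: cpair_def Chom_def fun_eq_iff intro!: blk_Dops w_zero)


definition pim :: "nat \<Rightarrow> sop \<Rightarrow> complex mat" where
  "pim n a = mat n n (\<lambda>(i, j). coeff (bA a (monom 1 j)) i)"

lemma trunc:
  assumes w: "wlin A" and c: "\<forall>q. A (monom 1 n * q) = monom 1 n * D q" and i: "i < n"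
  shows "coeff (A r) i = (\<Sum>l<n. coeff (A (monom 1 l)) i * coeff r l)"
proof -
  define t where "t = (\<Sum>l<n. monom (coeff r l) l)"
  have ct: "coeff t k = (if k < n then coeff r k else 0)" for k
    by (simp add: t_def coeff_sum coeff_monom)
  have "monom 1 n dvd r - t" unfolding monom_1_dvd_iff' by (simp add: ct)
  then obtain s where s: "r - t = monom 1 n * s" by (elim dvdE)
  have r: "r = t + monom 1 n * s" using s by (simp add: algebra_simps)
  have mA: "A (monom c l) = Polynomial.smult c (A (monom 1 l))" for c l
  proof -
    have "A (monom c l) = A (Polynomial.smult c (monom 1 l))" by (simp add: smult_monom)
    also have "\<dots> = Polynomial.smult c (A (monom 1 l))" using w wlin_def by blast
    finally show ?thesis .
  qed
  have At: "A t = (\<Sum>l<n. Polynomial.smult (coeff r l) (A (monom 1 l)))"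
    unfolding t_def wlin_sum[OF w] by (rule sum.cong[OF refl], rule mA)
  have "A r = A t + monom 1 n * D s" using w c by (simp add: r wlin_def)
  hence "coeff (A r) i = coeff (A t) i" using i by (simp add: coeff_Xn)
  also have "\<dots> = (\<Sum>l<n. coeff (A (monom 1 l)) i * coeff r l)"
    by (simp add: At coeff_sum mult.commute)
  finally show ?thesis .
qed

lemma Ccar_wlin: "a \<in> Ccar n \<Longrightarrow> wlin (bA a)"
  using Ccar_Dops Dops_blk Wset_lin by blast

lemma pim_mult: assumes a: "a \<in> Ccar n" and b: "b \<in> Ccar n"
  shows "pim n (a \<circ> b) = pim n a * pim n b"
proof (rule eq_matI)
  have aD: "a \<in> Dops" using a Ccar_Dops by blast
  have ca: "bB a = zf" "\<forall>q. bA a (monom 1 n * q) = monom 1 n * bD a q" using a by (auto simp: Ccar_def)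
  fix i j assume ij: "i < dim_row (pim n a * pim n b)" "j < dim_col (pim n a * pim n b)"
  hence i: "i < n" and j: "j < n" by (auto simp: pim_def)
  have "pim n (a \<circ> b) $$ (i, j) = coeff (bA a (bA b (monom 1 j))) i"
    using i j by (simp add: pim_def comp_parts[OF aD] ca)
  also have "\<dots> = (\<Sum>l<n. coeff (bA a (monom 1 l)) i * coeff (bA b (monom 1 j)) l)"
    by (rule trunc[OF Ccar_wlin[OF a] ca(2) i])
  also have "\<dots> = (pim n a * pim n b) $$ (i, j)"
    using i j by (simp add: pim_def scalar_prod_def atLeast0LessThan)
  finally show "pim n (a \<circ> b) $$ (i, j) = (pim n a * pim n b) $$ (i, j)" .
qed (simp_all add: pim_def)

lemma pim_zero_bA: "bA a = zf \<Longrightarrow> pim n a = 0\<^sub>m n n"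
  by (rule eq_matI) (auto simp: pim_def)

lemma pim_Chom: "a \<in> Chom n k \<Longrightarrow> k \<noteq> 0 \<Longrightarrow> pim n a = 0\<^sub>m n n"
  by (rule pim_zero_bA) (auto simp: Chom_def hom_blk zero_parts split: if_splits)

lemma pim_dD: assumes "a \<in> Dops" shows "pim n (dD n a) = 0\<^sub>m n n"
  by (rule eq_matI) (auto simp: pim_def dD_blk[OF assms] coeff_Xn Dops_parts0[OF assms])

lemma pim_hom: "dga_hom (pim n) (Cdga n) (gl_dga n)"
  unfolding dga_hom_def C_simps gl_simps
proof (intro conjI ballI allI)
  show "\<And>a. a \<in> Ccar n \<Longrightarrow> pim n a \<in> carrier_mat n n" by (simp add: pim_def)
  show "\<And>a b. a \<in> Ccar n \<Longrightarrow> b \<in> Ccar n \<Longrightarrow> pim n (op_add a b) = pim n a + pim n b"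
    by (rule eq_matI) (auto simp: pim_def op_add_eq bparts_add)
  show "\<And>c a. a \<in> Ccar n \<Longrightarrow> pim n (op_smult c a) = c \<cdot>\<^sub>m pim n a"
    by (rule eq_matI) (auto simp: pim_def bparts_smult)
  show "\<And>a b. a \<in> Ccar n \<Longrightarrow> b \<in> Ccar n \<Longrightarrow> pim n (a \<circ> b) = pim n a * pim n b"
    by (rule pim_mult)
  show "pim n id = 1\<^sub>m n" by (rule eq_matI) (auto simp: pim_def id_parts coeff_monom)
  show "\<And>k a. a \<in> Chom n k \<Longrightarrow> pim n a \<in> (if k = 0 then carrier_mat n n else {0\<^sub>m n n})"
    using pim_Chom by (auto simp: pim_def)
  show "\<And>a. a \<in> Ccar n \<Longrightarrow> pim n (dD n a) = 0\<^sub>m n n"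
    using pim_dD Ccar_Dops by blast
qed

lemma pim_surj: assumes M: "M \<in> carrier_mat n n" shows "\<exists>z\<in>Chom n 0. pim n z = M"
proof -
  define S where "S = {..<n} \<times> {..<n}"
  define c where "c s = M $$ s / kap n (fst s) (snd s)" for s
  define A where "A = (\<lambda>p. \<Sum>s\<in>S. Polynomial.smult (c s) (Aop n (fst s) (snd s) p))"
  define D where "D = (\<lambda>p. \<Sum>s\<in>S. Polynomial.smult (c s) (Dop n (fst s) (snd s) p))"
  have fS: "finite S" by (simp add: S_def)
  have cp: "cpair n A D" unfolding A_def D_def
    by (rule cpair_lin[OF fS]) (simp add: cpair_A)
  have z: "blk A zf zf D \<in> Chom n 0" by (rule cpair_Chom[OF cp])
  have bz: "bA (blk A zf zf D) = A" by (rule pim_blk_coeff[OF cp])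
  have "pim n (blk A zf zf D) = M"
  proof (rule eq_matI)
    fix r col assume rc: "r < dim_row M" "col < dim_col M"
    hence r: "r < n" and col: "col < n" using M by auto
    have "pim n (blk A zf zf D) $$ (r, col) = coeff (A (monom 1 col)) r"
      using r col by (simp add: pim_def bz)
    also have "\<dots> = (\<Sum>s\<in>S. coeff (Polynomial.smult (c s) (Aop n (fst s) (snd s) (monom 1 col))) r)"
      unfolding A_def by (rule coeff_sum)
    also have "\<dots> = (\<Sum>s\<in>S. (if s = (r, col) then M $$ (r, col) else 0))"
    proof (rule sum.cong[OF refl])
      fix s assume s: "s \<in> S"
      obtain i j where sij: "s = (i, j)" by fastforce
      have ij: "i < n" "j < n" using s sij by (auto simp: S_def)
      have k: "kap n i j \<noteq> 0" using R_monom[OF ij] by blast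
      have e: "coeff (Polynomial.smult (c s) (Aop n (fst s) (snd s) (monom 1 col))) r
          = c s * (if col = j \<and> r = i then kap n i j else 0)"
        unfolding sij fst_conv snd_conv coeff_smult Aop_monom[OF ij col] by (simp add: coeff_monom)
      show "coeff (Polynomial.smult (c s) (Aop n (fst s) (snd s) (monom 1 col))) r = (if s = (r, col) then M $$ (r, col) else 0)"
        unfolding e using k by (auto simp: sij c_def)
    qed
    also have "\<dots> = M $$ (r, col)"
    proof -
      have "(r, col) \<in> S" using r col by (simp add: S_def)
      thus ?thesis by (subst sum.delta[OF fS]) simp
    qed
    finally show "pim n (blk A zf zf D) $$ (r, col) = M $$ (r, col)" .
  next
    show "dim_row (pim n (blk A zf zf D)) = dim_row M" using M by (simp add: pim_def)
    show "dim_col (pim n (blk A zf zf D)) = dim_col M" using M by (simp add: pim_def)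
  qed
  thus ?thesis using z by blast
qed

lemma pim_kernel: assumes z: "z \<in> Chom n 0" and p: "pim n z = 0\<^sub>m n n"
  shows "z \<in> dD n ` Chom n (-1)"
proof -
  have zD: "z \<in> Dops" and zB: "bB z = zf" and zC: "bC z = zf"
    and cz: "\<forall>q. bA z (monom 1 n * q) = monom 1 n * bD z q" using z by (auto simp: Chom_def)
  have wz: "wlin (bA z)" using zD Dops_blk Wset_lin by blast
  have dv: "monom 1 n dvd bA z r" for r
    unfolding monom_1_dvd_iff'
  proof (intro allI impI)
    fix k assume k: "k < n"
    have "coeff (bA z (monom 1 l)) k = 0" if "l < n" for l
    proof -
      have "coeff (bA z (monom 1 l)) k = pim n z $$ (k, l)" using k that by (simp add: pim_def)
      also have "\<dots> = 0" using k that by (simp add: p)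
      finally show ?thesis .
    qed
    hence "(\<Sum>l<n. coeff (bA z (monom 1 l)) k * coeff r l) = 0" by simp
    thus "coeff (bA z r) k = 0" using trunc[OF wz cz k, where r=r] by simp
  qed
  have bAW: "bA z \<in> Wset" using Dops_blk[OF zD] by blast
  obtain a N where aN: "bA z = nf a N" using W_nf[OF bAW] by blast
  have da: "monom 1 n dvd a i" if "i < N" for i
  proof -
    have "monom 1 n dvd nf a N p" for p using dv[of p] by (simp add: aN)
    thus ?thesis using nf_dvd_coeffs[of "monom 1 n" a N i] that by blast
  qed
  define C' where "C' = nf (\<lambda>i. a i div monom 1 n) N"
  have C'W: "C' \<in> Wset" unfolding C'_def by (rule nf_Wset)
  have XC: "monom 1 n * C' p = bA z p" for p
  proof -
    have "monom 1 n * C' p = (\<Sum>i<N. (monom 1 n * (a i div monom 1 n)) * (pderiv ^^ i) p)"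
      by (simp add: C'_def nf_def sum_distrib_left mult.assoc)
    also have "\<dots> = (\<Sum>i<N. a i * (pderiv ^^ i) p)"
      by (rule sum.cong) (auto simp: da dvd_mult_div_cancel)
    finally show ?thesis by (simp add: aN nf_def)
  qed
  define b where "b = blk zf zf C' zf"
  have C0: "C' 0 = 0" using C'W Wset_wlin0 by blast
  have bD: "b \<in> Dops" unfolding b_def by (intro blk_Dops w_zero C'W)
  have bh: "b \<in> Chom n (-1)" using bD by (simp add: Chom_def hom_blk b_def C0)
  have "dD n b = blk (\<lambda>p. monom 1 n * bC b p) (\<lambda>q. monom 1 n * bD b q - bA b (monom 1 n * q)) zf
          (\<lambda>q. bC b (monom 1 n * q))" by (rule dD_blk[OF bD])
  also have "\<dots> = blk (bA z) zf zf (bD z)"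
  proof -
    have "monom 1 n * C' (monom 1 n * q) = monom 1 n * bD z q" for q using XC cz by simp
    hence "C' (monom 1 n * q) = bD z q" for q by simp
    thus ?thesis by (simp add: b_def XC C0 fun_eq_iff)
  qed
  also have "\<dots> = z"
  proof -
    have e: "z = blk (bA z) (bB z) (bC z) (bD z)" using linop_eq_blk[of z] Dops_blk[OF zD] by blast
    show ?thesis using e[unfolded zB zC] by (rule sym)
  qed
  finally have "dD n b = z" .
  thus ?thesis by (intro rev_image_eqI[OF bh]) simp
qed

lemma qiso_pim: "dga_qiso (pim n) (Cdga n) (gl_dga n)"
  unfolding dga_qiso_def
proof (intro conjI)
  show "is_dga (Cdga n)" by (rule is_dga_C)
  show "is_dga (gl_dga n)" by (rule is_dga_gl)
  show "dga_hom (pim n) (Cdga n) (gl_dga n)" by (rule pim_hom)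
  show "\<forall>k. \<forall>z\<in>dg_cocycles (Cdga n) k. pim n z \<in> dg_coboundaries (gl_dga n) k \<longrightarrow> z \<in> dg_coboundaries (Cdga n) k"
  proof (intro allI ballI impI)
    fix k z assume z: "z \<in> dg_cocycles (Cdga n) k" and c: "pim n z \<in> dg_coboundaries (gl_dga n) k"
    have zh: "z \<in> Chom n k" and zd: "dD n z = op_zero" using z by (auto simp: dg_cocycles_def C_simps)
    have pz: "pim n z = 0\<^sub>m n n" using c by (auto simp: dg_coboundaries_def gl_simps)
    have triv: "op_zero \<in> dg_coboundaries (Cdga n) k"
      unfolding dg_coboundaries_def C_simps
      using image_eqI[of op_zero "dD n" op_zero "Chom n (k - 1)", OF dD_zero[symmetric] zero_Chom] by simp
    consider "k = 0" | "k = -1" | "k \<noteq> 0 \<and> k \<noteq> -1" by blast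
    then show "z \<in> dg_coboundaries (Cdga n) k"
    proof cases
      case 1 then show ?thesis using pim_kernel[of z n] zh pz by (simp add: dg_coboundaries_def C_simps)
    next
      case 2
      have zD: "z \<in> Dops" and p: "bA z = zf" "bB z = zf" "bD z = zf" using zh 2 by (auto simp: Chom_def hom_blk)
      have "bA (dD n z) = zf" using zd zero_parts by simp
      hence "monom 1 n * bC z p = 0" for p by (simp add: dD_blk[OF zD] fun_eq_iff Dops_parts0[OF zD])
      hence "bC z = zf" by (simp add: fun_eq_iff)
      hence "z = op_zero" using linop_eq_blk[of z] Dops_blk[OF zD] p by (simp add: op_zero_blk)
      then show ?thesis using triv by simp
    next
      case 3
      hence "z = op_zero" using zh hom_zero_big[of z n k] by (cases "0 < k") (auto simp: Chom_def)
      then show ?thesis using triv by simp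
    qed
  qed
  show "\<forall>k. \<forall>w\<in>dg_cocycles (gl_dga n) k. \<exists>z\<in>dg_cocycles (Cdga n) k. \<exists>b\<in>dg_hom (gl_dga n) (k - 1).
          w = dg_add (gl_dga n) (pim n z) (dg_d (gl_dga n) b)"
  proof (intro allI ballI)
    fix k w assume w: "w \<in> dg_cocycles (gl_dga n) k"
    have b0: "0\<^sub>m n n \<in> dg_hom (gl_dga n) (k - 1)" by (simp add: gl_simps)
    show "\<exists>z\<in>dg_cocycles (Cdga n) k. \<exists>b\<in>dg_hom (gl_dga n) (k - 1).
          w = dg_add (gl_dga n) (pim n z) (dg_d (gl_dga n) b)"
    proof (cases "k = 0")
      case True
      hence wc: "w \<in> carrier_mat n n" using w by (simp add: dg_cocycles_def gl_simps)
      obtain z where z: "z \<in> Chom n 0" "pim n z = w" using pim_surj[OF wc] by blast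
      have "z \<in> dg_cocycles (Cdga n) k" using z True Chom0_dD by (simp add: dg_cocycles_def C_simps)
      moreover have "w = dg_add (gl_dga n) (pim n z) (dg_d (gl_dga n) (0\<^sub>m n n))"
        using z wc by (simp add: gl_simps)
      ultimately show ?thesis using b0 by blast
    next
      case False
      hence w0: "w = 0\<^sub>m n n" using w by (simp add: dg_cocycles_def gl_simps)
      have "op_zero \<in> dg_cocycles (Cdga n) k" using zero_Chom dD_zero by (simp add: dg_cocycles_def C_simps)
      moreover have "w = dg_add (gl_dga n) (pim n op_zero) (dg_d (gl_dga n) (0\<^sub>m n n))"
        using w0 pim_zero_bA[OF zero_parts(1)] by (simp add: gl_simps)
      ultimately show ?thesis using b0 by blast
    qed
  qed
qed

theorem lemma3p3:
  fixes n :: nat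
  assumes "n \<ge> 1"
  shows "quasi_isomorphic_in TYPE(sop) (D11 n) (gl_dga n)"
  unfolding quasi_isomorphic_in_def
  using qiso_id[of n] qiso_pim[of n] by blast


end
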